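(* Let $(\Omega,\mathcal F,(\mathcal F_t)_{t\ge0},\mathbb P)$ be a filtered probability space and $B$ a one-dimensional $(\mathcal F_t)$-Wiener process. Let $b=b(t,\omega)$ be an $(\mathcal F_t)_t$-adapted (progressively measurable) real-valued stochastic process, and let $C>0$, $\beta>0$ be constants such that $$\mathbb E\, b^2(t)\le C(1+t^{2\beta}),\qquad t\ge 0.$$ Then for every $\gamma>\beta+\tfrac12$, almost surely $$\frac{1}{t^{\gamma}}\int_0^t b(s)\,dB(s)\to 0,\qquad t\to\infty.$$ *)

theory Defs
  imports "HOL-Probability.Probability"
begin

text \<open>Filtered probability space: M a probability space, F a filtration of sub-sigma-algebras
  of M (indexed by real time; only times t \<ge> 0 are relevant).\<close>
definition filtered_prob_space :: "'a measure \<Rightarrow> (real \<Rightarrow> 'a measure) \<Rightarrow> bool" where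
  "filtered_prob_space M F \<longleftrightarrow> prob_space M \<and> filtration (space M) F \<and>
     (\<forall>t. sets (F t) \<subseteq> sets M)"

definition wiener_process :: "'a measure \<Rightarrow> (real \<Rightarrow> 'a measure) \<Rightarrow> (real \<Rightarrow> 'a \<Rightarrow> real) \<Rightarrow> bool" where
  "wiener_process M F B \<longleftrightarrow>
     (\<forall>t\<ge>0. B t \<in> borel_measurable (F t)) \<and>
     (\<forall>\<omega>\<in>space M. B 0 \<omega> = 0) \<and>
     (\<forall>\<omega>\<in>space M. continuous_on {0..} (\<lambda>t. B t \<omega>)) \<and>
     (\<forall>s t A U. 0 \<le> s \<and> s < t \<and> A \<in> sets (F s) \<and> U \<in> sets borel \<longrightarrow>
        measure M (A \<inter> {\<omega>\<in>space M. B t \<omega> - B s \<omega> \<in> U}) =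
        measure M A * measure (density lborel (normal_density 0 (sqrt (t - s)))) U)"

definition progressive :: "(real \<Rightarrow> 'a measure) \<Rightarrow> (real \<Rightarrow> 'a \<Rightarrow> real) \<Rightarrow> bool" where
  "progressive F b \<longleftrightarrow>
     (\<forall>t\<ge>0. (\<lambda>(s, \<omega>). b s \<omega>) \<in> borel_measurable (restrict_space borel {0..t} \<Otimes>\<^sub>M F t))"

definition simple_process :: "'a measure \<Rightarrow> (real \<Rightarrow> 'a measure) \<Rightarrow> real \<Rightarrow> nat \<Rightarrow> (nat \<Rightarrow> real)
    \<Rightarrow> (nat \<Rightarrow> 'a \<Rightarrow> real) \<Rightarrow> bool" where
  "simple_process M F T n tk \<xi> \<longleftrightarrow> tk 0 = 0 \<and> tk n = T \<and> (\<forall>k<n. tk k < tk (Suc k)) \<and>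
     (\<forall>k<n. \<xi> k \<in> borel_measurable (F (tk k)) \<and> integrable M (\<lambda>\<omega>. (\<xi> k \<omega>)\<^sup>2))"

definition simple_val :: "nat \<Rightarrow> (nat \<Rightarrow> real) \<Rightarrow> (nat \<Rightarrow> 'a \<Rightarrow> real) \<Rightarrow> real \<Rightarrow> 'a \<Rightarrow> real" where
  "simple_val n tk \<xi> s \<omega> = (\<Sum>k<n. if tk k \<le> s \<and> s < tk (Suc k) then \<xi> k \<omega> else 0)"

definition simple_int :: "(real \<Rightarrow> 'a \<Rightarrow> real) \<Rightarrow> nat \<Rightarrow> (nat \<Rightarrow> real) \<Rightarrow> (nat \<Rightarrow> 'a \<Rightarrow> real) \<Rightarrow> 'a \<Rightarrow> real" where
  "simple_int B n tk \<xi> \<omega> = (\<Sum>k<n. \<xi> k \<omega> * (B (tk (Suc k)) \<omega> - B (tk k) \<omega>))"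

text \<open>X is (a version of) the Ito integral of b over [0,T]: the L^2(P) limit of the Ito
  integrals of simple adapted processes converging to b in L^2([0,T] \<times> \<Omega>).\<close>
definition ito_integral_at :: "'a measure \<Rightarrow> (real \<Rightarrow> 'a measure) \<Rightarrow> (real \<Rightarrow> 'a \<Rightarrow> real)
    \<Rightarrow> (real \<Rightarrow> 'a \<Rightarrow> real) \<Rightarrow> real \<Rightarrow> ('a \<Rightarrow> real) \<Rightarrow> bool" where
  "ito_integral_at M F B b T X \<longleftrightarrow> X \<in> borel_measurable M \<and>
     (\<exists>n tk \<xi>. (\<forall>m. simple_process M F T (n m) (tk m) (\<xi> m)) \<and>
        ((\<lambda>m. \<integral>\<^sup>+\<omega>. (\<integral>\<^sup>+s\<in>{0..T}. ennreal ((simple_val (n m) (tk m) (\<xi> m) s \<omega> - b s \<omega>)\<^sup>2) \<partial>lborel) \<partial>M)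
           \<longlonglongrightarrow> 0) \<and>
        ((\<lambda>m. \<integral>\<^sup>+\<omega>. ennreal ((X \<omega> - simple_int B (n m) (tk m) (\<xi> m) \<omega>)\<^sup>2) \<partial>M) \<longlonglongrightarrow> 0))"

text \<open>The Ito integral process t \<mapsto> \<integral>_0^t b dB, taken in its (a.s.) continuous version.\<close>
definition ito_integral_process :: "'a measure \<Rightarrow> (real \<Rightarrow> 'a measure) \<Rightarrow> (real \<Rightarrow> 'a \<Rightarrow> real)
    \<Rightarrow> (real \<Rightarrow> 'a \<Rightarrow> real) \<Rightarrow> (real \<Rightarrow> 'a \<Rightarrow> real) \<Rightarrow> bool" where
  "ito_integral_process M F B b I \<longleftrightarrow>
     (\<forall>T\<ge>0. ito_integral_at M F B b T (I T)) \<and>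
     (AE \<omega> in M. continuous_on {0..} (\<lambda>t. I t \<omega>))"

end

theory Submission
  imports Defs
begin
locale wsetup = prob_space M for M :: "'a measure" +
  fixes F :: "real \<Rightarrow> 'a measure" and B :: "real \<Rightarrow> 'a \<Rightarrow> real"
  assumes filt: "filtration (space M) F"
    and subs: "\<And>t. sets (F t) \<subseteq> sets M"
    and Bad: "\<And>t. t \<ge> 0 \<Longrightarrow> B t \<in> borel_measurable (F t)"
    and Bind: "\<And>s t A U. 0 \<le> s \<Longrightarrow> s < t \<Longrightarrow> A \<in> sets (F s) \<Longrightarrow> U \<in> sets borel \<Longrightarrow>
        measure M (A \<inter> {\<omega>\<in>space M. B t \<omega> - B s \<omega> \<in> U}) =
        measure M A * measure (density lborel (normal_density 0 (sqrt (t - s)))) U"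
begin

lemma spF: "space (F t) = space M"
  using filtration.space_F[OF filt] by simp

lemma subalg: "subalgebra M (F t)"
  unfolding subalgebra_def using subs spF by auto

lemma Fmeas: "f \<in> borel_measurable (F t) \<Longrightarrow> f \<in> borel_measurable M"
  using measurable_from_subalg[OF subalg] by blast

lemma Fmono: "s \<le> t \<Longrightarrow> f \<in> borel_measurable (F s) \<Longrightarrow> f \<in> borel_measurable (F t)"
  apply (rule measurable_from_subalg[of "F t" "F s"])
  using filtration.sets_F_mono[OF filt] spF unfolding subalgebra_def by auto

lemma Bmeas: "0 \<le> s \<Longrightarrow> s \<le> t \<Longrightarrow> B s \<in> borel_measurable (F t)"
  using Fmono Bad by blast

lemma BM: "0 \<le> s \<Longrightarrow> B s \<in> borel_measurable M"
  using Fmeas Bad by blast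

lemma distr_inc:
  assumes "0 \<le> s" "s < t"
  shows "distr M borel (\<lambda>\<omega>. B t \<omega> - B s \<omega>) = density lborel (normal_density 0 (sqrt (t - s)))"
proof (rule measure_eqI)
  let ?N = "density lborel (normal_density 0 (sqrt (t - s)))"
  have ps: "prob_space ?N" by (rule prob_space_normal_density) (use assms in auto)
  have Xm: "(\<lambda>\<omega>. B t \<omega> - B s \<omega>) \<in> borel_measurable M" using BM assms by auto
  show "sets (distr M borel (\<lambda>\<omega>. B t \<omega> - B s \<omega>)) = sets ?N" by simp
  fix U assume U: "U \<in> sets (distr M borel (\<lambda>\<omega>. B t \<omega> - B s \<omega>))"
  then have Ub: "U \<in> sets borel" by simp
  have "space M \<in> sets (F s)" using sets.top[of "F s"] spF by simp
  from Bind[OF assms this Ub]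
  have "measure M {\<omega>\<in>space M. B t \<omega> - B s \<omega> \<in> U} = measure ?N U"
    by (simp add: Int_absorb1 prob_space)
  moreover have "(\<lambda>\<omega>. B t \<omega> - B s \<omega>) -` U \<inter> space M = {\<omega>\<in>space M. B t \<omega> - B s \<omega> \<in> U}" by auto
  ultimately show "emeasure (distr M borel (\<lambda>\<omega>. B t \<omega> - B s \<omega>)) U = emeasure ?N U"
    using Xm Ub
    by (simp add: emeasure_distr emeasure_eq_measure finite_measure.emeasure_eq_measure[OF prob_space.finite_measure[OF ps]])
qed

lemma inc_integral:
  assumes "0 \<le> s" "s < t" and g: "g \<in> borel_measurable borel"
  shows "integrable M (\<lambda>\<omega>. g (B t \<omega> - B s \<omega>)) \<longleftrightarrow>
           integrable lborel (\<lambda>x. normal_density 0 (sqrt (t - s)) x * g x)"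
    and "(\<integral>\<omega>. g (B t \<omega> - B s \<omega>) \<partial>M) = (\<integral>x. normal_density 0 (sqrt (t - s)) x * g x \<partial>lborel)"
proof -
  have Xm: "(\<lambda>\<omega>. B t \<omega> - B s \<omega>) \<in> measurable M borel" using BM assms by auto
  have "integrable M (\<lambda>\<omega>. g (B t \<omega> - B s \<omega>)) \<longleftrightarrow> integrable (distr M borel (\<lambda>\<omega>. B t \<omega> - B s \<omega>)) g"
    using integrable_distr_eq[OF Xm g] by simp
  also have "\<dots> \<longleftrightarrow> integrable lborel (\<lambda>x. normal_density 0 (sqrt (t - s)) x * g x)"
    unfolding distr_inc[OF assms(1,2)]
    by (subst integrable_density) (use g in \<open>auto simp: measurable_lborel1\<close>)
  finally show "integrable M (\<lambda>\<omega>. g (B t \<omega> - B s \<omega>)) \<longleftrightarrow>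
           integrable lborel (\<lambda>x. normal_density 0 (sqrt (t - s)) x * g x)" .
  have "(\<integral>\<omega>. g (B t \<omega> - B s \<omega>) \<partial>M) = integral\<^sup>L (distr M borel (\<lambda>\<omega>. B t \<omega> - B s \<omega>)) g"
    using integral_distr[OF Xm g] by simp
  also have "\<dots> = (\<integral>x. normal_density 0 (sqrt (t - s)) x * g x \<partial>lborel)"
    unfolding distr_inc[OF assms(1,2)]
    by (subst integral_density) (use g in \<open>auto simp: measurable_lborel1\<close>)
  finally show "(\<integral>\<omega>. g (B t \<omega> - B s \<omega>) \<partial>M) = (\<integral>x. normal_density 0 (sqrt (t - s)) x * g x \<partial>lborel)" .
qed

lemma inc_mean:
  assumes "0 \<le> s" "s \<le> t"
  shows "integrable M (\<lambda>\<omega>. B t \<omega> - B s \<omega>)" "(\<integral>\<omega>. B t \<omega> - B s \<omega> \<partial>M) = 0"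
proof -
  have "integrable M (\<lambda>\<omega>. B t \<omega> - B s \<omega>) \<and> (\<integral>\<omega>. B t \<omega> - B s \<omega> \<partial>M) = 0"
  proof (cases "s = t")
    case True then show ?thesis by simp
  next
    case False
    then have st: "s < t" using assms by simp
    have sp: "0 < sqrt (t - s)" using st by simp
    show ?thesis
      using inc_integral[OF assms(1) st, of "\<lambda>x. x"]
        integrable_normal_moment_nz_1[OF sp, of 0] integral_normal_moment_nz_1[OF sp, of 0]
      by simp
  qed
  then show "integrable M (\<lambda>\<omega>. B t \<omega> - B s \<omega>)" "(\<integral>\<omega>. B t \<omega> - B s \<omega> \<partial>M) = 0" by auto
qed

lemma inc_var:
  assumes "0 \<le> s" "s \<le> t"
  shows "integrable M (\<lambda>\<omega>. (B t \<omega> - B s \<omega>)\<^sup>2)" "(\<integral>\<omega>. (B t \<omega> - B s \<omega>)\<^sup>2 \<partial>M) = t - s"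
proof -
  have "integrable M (\<lambda>\<omega>. (B t \<omega> - B s \<omega>)\<^sup>2) \<and> (\<integral>\<omega>. (B t \<omega> - B s \<omega>)\<^sup>2 \<partial>M) = t - s"
  proof (cases "s = t")
    case True then show ?thesis by simp
  next
    case False
    then have st: "s < t" using assms by simp
    have sp: "0 < sqrt (t - s)" using st by simp
    have i1: "integrable lborel (\<lambda>x. normal_density 0 (sqrt (t - s)) x * x\<^sup>2)"
      using integrable_normal_moment[OF sp, of 0 2] by simp
    have i2: "(\<integral>x. normal_density 0 (sqrt (t - s)) x * x\<^sup>2 \<partial>lborel) = t - s"
      using integral_normal_moment_even[OF sp, of 0 1] st by (simp add: numeral_eq_Suc)
    show ?thesis
      using inc_integral[OF assms(1) st, of "\<lambda>x. x\<^sup>2"] i1 i2 by simp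
  qed
  then show "integrable M (\<lambda>\<omega>. (B t \<omega> - B s \<omega>)\<^sup>2)" "(\<integral>\<omega>. (B t \<omega> - B s \<omega>)\<^sup>2 \<partial>M) = t - s" by auto
qed

lemma indep_inc:
  assumes "0 \<le> s" "s < t" and Y: "Y \<in> borel_measurable (F s)"
  shows "indep_var borel Y borel (\<lambda>\<omega>. B t \<omega> - B s \<omega>)"
proof -
  let ?X = "\<lambda>\<omega>. B t \<omega> - B s \<omega>"
  let ?N = "density lborel (normal_density 0 (sqrt (t - s)))"
  have Xm: "?X \<in> borel_measurable M" using BM assms by auto
  have YM: "Y \<in> borel_measurable M" using Fmeas Y by blast
  let ?GY = "{Y -` A \<inter> space M | A. A \<in> sets borel}"
  let ?GX = "{?X -` A \<inter> space M | A. A \<in> sets borel}"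
  have "indep_set ?GY ?GX"
    unfolding indep_sets2_eq
  proof (intro conjI ballI)
    show "?GY \<subseteq> events" using YM by (auto intro: measurable_sets)
    show "?GX \<subseteq> events" using Xm by (auto intro: measurable_sets)
    fix a b assume a: "a \<in> ?GY" and b: "b \<in> ?GX"
    from a obtain A where A: "A \<in> sets borel" "a = Y -` A \<inter> space M" by auto
    from b obtain U where U: "U \<in> sets borel" "b = ?X -` U \<inter> space M" by auto
    have aF: "a \<in> sets (F s)" using measurable_sets[OF Y A(1)] A(2) spF by simp
    have sF: "space M \<in> sets (F s)" using sets.top[of "F s"] spF by simp
    have bb: "b = {\<omega>\<in>space M. ?X \<omega> \<in> U}" using U by auto
    have "prob (a \<inter> b) = prob a * measure ?N U"
      using Bind[OF assms(1,2) aF U(1)] bb by simp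
    moreover have "prob b = measure ?N U"
      using Bind[OF assms(1,2) sF U(1)] bb by (simp add: Int_absorb1 prob_space)
    ultimately show "prob (a \<inter> b) = prob a * prob b" by simp
  qed
  then have "indep_set (sigma_sets (space M) ?GY) (sigma_sets (space M) ?GX)"
  proof (rule indep_set_sigma_sets)
    show "Int_stable ?GY" unfolding Int_stable_def
    proof (intro ballI)
      fix a b assume "a \<in> ?GY" "b \<in> ?GY"
      then obtain A A' where "A \<in> sets borel" "A' \<in> sets borel" "a = Y -` A \<inter> space M" "b = Y -` A' \<inter> space M" by auto
      then show "a \<inter> b \<in> ?GY" by (intro CollectI exI[of _ "A \<inter> A'"]) auto
    qed
    show "Int_stable ?GX" unfolding Int_stable_def
    proof (intro ballI)
      fix a b assume "a \<in> ?GX" "b \<in> ?GX"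
      then obtain A A' where "A \<in> sets borel" "A' \<in> sets borel" "a = ?X -` A \<inter> space M" "b = ?X -` A' \<inter> space M" by auto
      then show "a \<inter> b \<in> ?GX" by (intro CollectI exI[of _ "A \<inter> A'"]) auto
    qed
  qed
  then show ?thesis
    unfolding indep_var_eq using Xm YM by simp
qed

lemma zero_lemma:
  assumes "0 \<le> c" "c \<le> d" and Y: "Y \<in> borel_measurable (F c)" "integrable M Y"
  shows "integrable M (\<lambda>\<omega>. Y \<omega> * (B d \<omega> - B c \<omega>))" "(\<integral>\<omega>. Y \<omega> * (B d \<omega> - B c \<omega>) \<partial>M) = 0"
proof -
  have "integrable M (\<lambda>\<omega>. Y \<omega> * (B d \<omega> - B c \<omega>)) \<and> (\<integral>\<omega>. Y \<omega> * (B d \<omega> - B c \<omega>) \<partial>M) = 0"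
  proof (cases "c = d")
    case True then show ?thesis by simp
  next
    case False
    then have cd: "c < d" using assms by simp
    note ind = indep_inc[OF assms(1) cd Y(1)]
    show ?thesis
      using indep_var_integrable[OF ind Y(2) inc_mean(1)[OF assms(1,2)]]
        indep_var_lebesgue_integral[OF ind Y(2) inc_mean(1)[OF assms(1,2)]] inc_mean(2)[OF assms(1,2)]
      by simp
  qed
  then show "integrable M (\<lambda>\<omega>. Y \<omega> * (B d \<omega> - B c \<omega>))" "(\<integral>\<omega>. Y \<omega> * (B d \<omega> - B c \<omega>) \<partial>M) = 0" by auto
qed

lemma sq_lemma:
  assumes "0 \<le> c" "c \<le> d" and Y: "Y \<in> borel_measurable (F c)" "integrable M Y"
  shows "integrable M (\<lambda>\<omega>. Y \<omega> * (B d \<omega> - B c \<omega>)\<^sup>2)"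
    "(\<integral>\<omega>. Y \<omega> * (B d \<omega> - B c \<omega>)\<^sup>2 \<partial>M) = (\<integral>\<omega>. Y \<omega> \<partial>M) * (d - c)"
proof -
  have "integrable M (\<lambda>\<omega>. Y \<omega> * (B d \<omega> - B c \<omega>)\<^sup>2) \<and> (\<integral>\<omega>. Y \<omega> * (B d \<omega> - B c \<omega>)\<^sup>2 \<partial>M) = (\<integral>\<omega>. Y \<omega> \<partial>M) * (d - c)"
  proof (cases "c = d")
    case True then show ?thesis by simp
  next
    case False
    then have cd: "c < d" using assms by simp
    note ind0 = indep_inc[OF assms(1) cd Y(1)]
    have "indep_var borel (id \<circ> Y) borel ((\<lambda>x. x\<^sup>2) \<circ> (\<lambda>\<omega>. B d \<omega> - B c \<omega>))"
      by (rule indep_var_compose[OF ind0]) auto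
    then have ind: "indep_var borel Y borel (\<lambda>\<omega>. (B d \<omega> - B c \<omega>)\<^sup>2)" by (simp add: o_def)
    show ?thesis
      using indep_var_integrable[OF ind Y(2) inc_var(1)[OF assms(1,2)]]
        indep_var_lebesgue_integral[OF ind Y(2) inc_var(1)[OF assms(1,2)]] inc_var(2)[OF assms(1,2)]
      by simp
  qed
  then show "integrable M (\<lambda>\<omega>. Y \<omega> * (B d \<omega> - B c \<omega>)\<^sup>2)"
    "(\<integral>\<omega>. Y \<omega> * (B d \<omega> - B c \<omega>)\<^sup>2 \<partial>M) = (\<integral>\<omega>. Y \<omega> \<partial>M) * (d - c)" by auto
qed

end

definition ov :: "real \<Rightarrow> real \<Rightarrow> real \<Rightarrow> real \<Rightarrow> real" where
  "ov a b c d = max 0 (min b d - max a c)"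

lemma ov_sym: "ov a b c d = ov c d a b"
  unfolding ov_def by (simp add: min.commute max.commute)

lemma ov_measure: "measure lborel {max a c..<min b d} = ov a b c d"
proof (cases "max a c \<le> min b d")
  case True
  have "measure lborel {max a c..<min b d} = enn2real (emeasure lborel {max a c..<min b d})"
    by (rule Sigma_Algebra.measure_def)
  also have "\<dots> = min b d - max a c" using True by (subst emeasure_lborel_Ico) auto
  finally show ?thesis using True unfolding ov_def by simp
next
  case False
  then have e: "{max a c..<min b d} = {}" by auto
  have "ov a b c d = 0" using False unfolding ov_def by (auto simp: max_def min_def)
  then show ?thesis unfolding e measure_empty by simp
qed

lemma L2prod:
  fixes f g :: "'a \<Rightarrow> real" and M :: "'a measure"
  assumes "f \<in> borel_measurable M" "g \<in> borel_measurable M"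
    "integrable M (\<lambda>x. (f x)\<^sup>2)" "integrable M (\<lambda>x. (g x)\<^sup>2)"
  shows "integrable M (\<lambda>x. f x * g x)"
proof (rule Bochner_Integration.integrable_bound[where f="\<lambda>x. (f x)\<^sup>2 + (g x)\<^sup>2"])
  show "integrable M (\<lambda>x. (f x)\<^sup>2 + (g x)\<^sup>2)" using assms by auto
  show "(\<lambda>x. f x * g x) \<in> borel_measurable M" using assms by auto
  show "AE x in M. norm (f x * g x) \<le> norm ((f x)\<^sup>2 + (g x)\<^sup>2)"
  proof (intro AE_I2)
    fix x
    have "0 \<le> (\<bar>f x\<bar> - \<bar>g x\<bar>)\<^sup>2" by simp
    then have "2 * \<bar>f x * g x\<bar> \<le> (f x)\<^sup>2 + (g x)\<^sup>2"
      by (simp add: power2_eq_square algebra_simps abs_mult)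
    then show "norm (f x * g x) \<le> norm ((f x)\<^sup>2 + (g x)\<^sup>2)" by simp
  qed
qed

definition fval :: "nat \<Rightarrow> (nat \<Rightarrow> real) \<Rightarrow> (nat \<Rightarrow> real) \<Rightarrow> (nat \<Rightarrow> 'a \<Rightarrow> real) \<Rightarrow> real \<Rightarrow> 'a \<Rightarrow> real" where
  "fval n a e z s \<omega> = (\<Sum>k<n. if a k \<le> s \<and> s < e k then z k \<omega> else 0)"

definition fint :: "(real \<Rightarrow> 'a \<Rightarrow> real) \<Rightarrow> nat \<Rightarrow> (nat \<Rightarrow> real) \<Rightarrow> (nat \<Rightarrow> real) \<Rightarrow> (nat \<Rightarrow> 'a \<Rightarrow> real) \<Rightarrow> 'a \<Rightarrow> real" where
  "fint B n a e z \<omega> = (\<Sum>k<n. z k \<omega> * (B (e k) \<omega> - B (a k) \<omega>))"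

context wsetup
begin

definition valid :: "nat \<Rightarrow> (nat \<Rightarrow> real) \<Rightarrow> (nat \<Rightarrow> real) \<Rightarrow> (nat \<Rightarrow> 'a \<Rightarrow> real) \<Rightarrow> bool" where
  "valid n a e z \<longleftrightarrow> (\<forall>k<n. 0 \<le> a k \<and> a k \<le> e k \<and> z k \<in> borel_measurable (F (a k)) \<and>
      integrable M (\<lambda>\<omega>. (z k \<omega>)\<^sup>2))"

lemma incM: "0 \<le> a \<Longrightarrow> 0 \<le> b \<Longrightarrow> (\<lambda>\<omega>. B b \<omega> - B a \<omega>) \<in> borel_measurable M"
  using BM by auto

lemma xiDelta_L2:
  assumes "0 \<le> a" "a \<le> b" "\<xi> \<in> borel_measurable (F a)" "integrable M (\<lambda>\<omega>. (\<xi> \<omega>)\<^sup>2)"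
  shows "integrable M (\<lambda>\<omega>. (\<xi> \<omega> * (B b \<omega> - B a \<omega>))\<^sup>2)"
proof -
  have "(\<lambda>\<omega>. (\<xi> \<omega>)\<^sup>2) \<in> borel_measurable (F a)" using assms by measurable
  from sq_lemma(1)[OF assms(1,2) this assms(4)]
  show ?thesis by (simp add: power_mult_distrib)
qed

lemma T2:
  assumes "0 \<le> c" "c \<le> b" "c \<le> d" and Z: "Z \<in> borel_measurable (F c)" "integrable M Z"
  shows "integrable M (\<lambda>\<omega>. Z \<omega> * (B b \<omega> - B c \<omega>) * (B d \<omega> - B c \<omega>))"
    "(\<integral>\<omega>. Z \<omega> * (B b \<omega> - B c \<omega>) * (B d \<omega> - B c \<omega>) \<partial>M) = (\<integral>\<omega>. Z \<omega> \<partial>M) * (min b d - c)"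
proof -
  have gen: "integrable M (\<lambda>\<omega>. Z \<omega> * (B b \<omega> - B c \<omega>) * (B d \<omega> - B c \<omega>)) \<and>
    (\<integral>\<omega>. Z \<omega> * (B b \<omega> - B c \<omega>) * (B d \<omega> - B c \<omega>) \<partial>M) = (\<integral>\<omega>. Z \<omega> \<partial>M) * (min b d - c)"
    if h: "0 \<le> c" "c \<le> b" "b \<le> d" for b d
  proof -
    have eq: "(\<lambda>\<omega>. Z \<omega> * (B b \<omega> - B c \<omega>) * (B d \<omega> - B c \<omega>)) =
      (\<lambda>\<omega>. Z \<omega> * (B b \<omega> - B c \<omega>)\<^sup>2 + (Z \<omega> * (B b \<omega> - B c \<omega>)) * (B d \<omega> - B b \<omega>))"
      by (auto simp: fun_eq_iff power2_eq_square algebra_simps)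
    have Yb: "(\<lambda>\<omega>. Z \<omega> * (B b \<omega> - B c \<omega>)) \<in> borel_measurable (F b)"
      using Fmono[OF h(2) Z(1)] Bmeas[OF h(1) h(2)] Bmeas[OF order_trans[OF h(1) h(2)] order_refl] by measurable
    note i1 = sq_lemma[OF h(1,2) Z]
    note z1 = zero_lemma[OF h(1,2) Z]
    note z2 = zero_lemma[OF _ h(3) Yb z1(1)]
    show ?thesis unfolding eq using i1 z2 h by (simp add: min_def)
  qed
  show "integrable M (\<lambda>\<omega>. Z \<omega> * (B b \<omega> - B c \<omega>) * (B d \<omega> - B c \<omega>))"
    "(\<integral>\<omega>. Z \<omega> * (B b \<omega> - B c \<omega>) * (B d \<omega> - B c \<omega>) \<partial>M) = (\<integral>\<omega>. Z \<omega> \<partial>M) * (min b d - c)"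
  proof -
    have "integrable M (\<lambda>\<omega>. Z \<omega> * (B b \<omega> - B c \<omega>) * (B d \<omega> - B c \<omega>)) \<and>
    (\<integral>\<omega>. Z \<omega> * (B b \<omega> - B c \<omega>) * (B d \<omega> - B c \<omega>) \<partial>M) = (\<integral>\<omega>. Z \<omega> \<partial>M) * (min b d - c)"
    proof (cases "b \<le> d")
      case True then show ?thesis using gen[of b d] assms by simp
    next
      case False
      then have "integrable M (\<lambda>\<omega>. Z \<omega> * (B d \<omega> - B c \<omega>) * (B b \<omega> - B c \<omega>)) \<and>
        (\<integral>\<omega>. Z \<omega> * (B d \<omega> - B c \<omega>) * (B b \<omega> - B c \<omega>) \<partial>M) = (\<integral>\<omega>. Z \<omega> \<partial>M) * (min d b - c)"
        using gen[of d b] assms by simp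
      then show ?thesis by (simp add: mult_ac min.commute)
    qed
    then show "integrable M (\<lambda>\<omega>. Z \<omega> * (B b \<omega> - B c \<omega>) * (B d \<omega> - B c \<omega>))"
      "(\<integral>\<omega>. Z \<omega> * (B b \<omega> - B c \<omega>) * (B d \<omega> - B c \<omega>) \<partial>M) = (\<integral>\<omega>. Z \<omega> \<partial>M) * (min b d - c)" by auto
  qed
qed

lemma pair_ord:
  assumes "0 \<le> a" "a \<le> b" "0 \<le> c" "c \<le> d" "a \<le> c"
    and xi: "\<xi> \<in> borel_measurable (F a)" "integrable M (\<lambda>\<omega>. (\<xi> \<omega>)\<^sup>2)"
    and eta: "\<eta> \<in> borel_measurable (F c)" "integrable M (\<lambda>\<omega>. (\<eta> \<omega>)\<^sup>2)"
  shows "integrable M (\<lambda>\<omega>. (\<xi> \<omega> * (B b \<omega> - B a \<omega>)) * (\<eta> \<omega> * (B d \<omega> - B c \<omega>))) \<and>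
    (\<integral>\<omega>. (\<xi> \<omega> * (B b \<omega> - B a \<omega>)) * (\<eta> \<omega> * (B d \<omega> - B c \<omega>)) \<partial>M) = (\<integral>\<omega>. \<xi> \<omega> * \<eta> \<omega> \<partial>M) * ov a b c d"
proof -
  have xiM: "\<xi> \<in> borel_measurable M" using Fmeas xi by blast
  have etaM: "\<eta> \<in> borel_measurable M" using Fmeas eta by blast
  have xic: "\<xi> \<in> borel_measurable (F c)" using Fmono[OF assms(5) xi(1)] .
  show ?thesis
  proof (cases "b \<le> c")
    case True
    have Ym: "(\<lambda>\<omega>. \<xi> \<omega> * (B b \<omega> - B a \<omega>) * \<eta> \<omega>) \<in> borel_measurable (F c)"
      using xic eta(1) Bmeas[OF order_trans[OF assms(1,2)] True] Bmeas[OF assms(1) assms(5)] by measurable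
    have Yi: "integrable M (\<lambda>\<omega>. \<xi> \<omega> * (B b \<omega> - B a \<omega>) * \<eta> \<omega>)"
      by (rule L2prod) (use xiM etaM incM assms xiDelta_L2[OF assms(1,2) xi] eta in auto)
    note z = zero_lemma[OF assms(3,4) Ym Yi]
    have "ov a b c d = 0" unfolding ov_def using True assms by auto
    then show ?thesis using z by (simp add: mult_ac)
  next
    case False
    have eq: "(\<lambda>\<omega>. (\<xi> \<omega> * (B b \<omega> - B a \<omega>)) * (\<eta> \<omega> * (B d \<omega> - B c \<omega>))) =
       (\<lambda>\<omega>. (\<xi> \<omega> * (B c \<omega> - B a \<omega>) * \<eta> \<omega>) * (B d \<omega> - B c \<omega>) +
             (\<xi> \<omega> * \<eta> \<omega>) * (B b \<omega> - B c \<omega>) * (B d \<omega> - B c \<omega>))"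
      by (auto simp: fun_eq_iff algebra_simps)
    have Ym: "(\<lambda>\<omega>. \<xi> \<omega> * (B c \<omega> - B a \<omega>) * \<eta> \<omega>) \<in> borel_measurable (F c)"
      using xic eta(1) Bmeas[OF assms(3) order_refl] Bmeas[OF assms(1) assms(5)] by measurable
    have Yi: "integrable M (\<lambda>\<omega>. \<xi> \<omega> * (B c \<omega> - B a \<omega>) * \<eta> \<omega>)"
      by (rule L2prod) (use xiM etaM incM assms xiDelta_L2[OF assms(1,5) xi] eta in auto)
    note z = zero_lemma[OF assms(3,4) Ym Yi]
    have Zm: "(\<lambda>\<omega>. \<xi> \<omega> * \<eta> \<omega>) \<in> borel_measurable (F c)" using xic eta(1) by measurable
    have Zi: "integrable M (\<lambda>\<omega>. \<xi> \<omega> * \<eta> \<omega>)" using L2prod[OF xiM etaM xi(2) eta(2)] .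
    have cb: "c \<le> b" using False by simp
    note t = T2[OF assms(3) cb assms(4) Zm Zi]
    have "ov a b c d = min b d - c" unfolding ov_def using False assms by auto
    then show ?thesis unfolding eq using z t by simp
  qed
qed

lemma pair:
  assumes "0 \<le> a" "a \<le> b" "0 \<le> c" "c \<le> d"
    and xi: "\<xi> \<in> borel_measurable (F a)" "integrable M (\<lambda>\<omega>. (\<xi> \<omega>)\<^sup>2)"
    and eta: "\<eta> \<in> borel_measurable (F c)" "integrable M (\<lambda>\<omega>. (\<eta> \<omega>)\<^sup>2)"
  shows "integrable M (\<lambda>\<omega>. (\<xi> \<omega> * (B b \<omega> - B a \<omega>)) * (\<eta> \<omega> * (B d \<omega> - B c \<omega>))) \<and>
    (\<integral>\<omega>. (\<xi> \<omega> * (B b \<omega> - B a \<omega>)) * (\<eta> \<omega> * (B d \<omega> - B c \<omega>)) \<partial>M) = (\<integral>\<omega>. \<xi> \<omega> * \<eta> \<omega> \<partial>M) * ov a b c d"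
proof (cases "a \<le> c")
  case True then show ?thesis using pair_ord[OF assms(1-4) True xi eta] by simp
next
  case False
  then have "c \<le> a" by simp
  from pair_ord[OF assms(3,4,1,2) this eta xi] show ?thesis
    by (simp add: mult.commute ov_sym)
qed

end

lemma Ico_fin: "emeasure lborel {x..<y::real} < top"
proof (cases "x \<le> y")
  case True then show ?thesis by simp
next
  case False then have "{x..<y} = {}" by auto
  then show ?thesis by simp
qed

lemma fval_sq: "(fval n a e z s \<omega>)\<^sup>2 =
  (\<Sum>k<n. \<Sum>j<n. z k \<omega> * z j \<omega> * indicator {max (a k) (a j)..<min (e k) (e j)} s)"
  unfolding fval_def power2_eq_square sum_product
  by (intro sum.cong refl) (auto simp: indicator_def)

lemma fval_inner:
  "(\<integral>\<^sup>+s. ennreal ((fval n a e z s \<omega>)\<^sup>2) \<partial>lborel) =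
     ennreal (\<Sum>k<n. \<Sum>j<n. z k \<omega> * z j \<omega> * ov (a k) (e k) (a j) (e j))"
    and fval_inner_nn: "0 \<le> (\<Sum>k<n. \<Sum>j<n. z k \<omega> * z j \<omega> * ov (a k) (e k) (a j) (e j))"
proof -
  let ?f = "\<lambda>s. (\<Sum>k<n. \<Sum>j<n. z k \<omega> * z j \<omega> * indicator {max (a k) (a j)..<min (e k) (e j)} s) :: real"
  have int: "integrable lborel ?f"
    by (intro Bochner_Integration.integrable_sum integrable_mult_right integrable_real_indicator) (auto simp: Ico_fin)
  have "(\<integral>s. ?f s \<partial>lborel) = (\<Sum>k<n. \<Sum>j<n. z k \<omega> * z j \<omega> * ov (a k) (e k) (a j) (e j))"
  proof -
    have e1: "(\<integral>s. z k \<omega> * z j \<omega> * indicator {max (a k) (a j)..<min (e k) (e j)} s \<partial>lborel) =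
       z k \<omega> * z j \<omega> * ov (a k) (e k) (a j) (e j)" for k j
      by (simp add: ov_measure)
    have i1: "integrable lborel (\<lambda>s. z k \<omega> * z j \<omega> * indicator {max (a k) (a j)..<min (e k) (e j)} s :: real)" for k j
      by (intro integrable_mult_right integrable_real_indicator) (auto simp: Ico_fin)
    have e2: "(\<integral>s. (\<Sum>j<n. z k \<omega> * z j \<omega> * indicator {max (a k) (a j)..<min (e k) (e j)} s) \<partial>lborel) =
       (\<Sum>j<n. z k \<omega> * z j \<omega> * ov (a k) (e k) (a j) (e j))" for k
    proof -
      have "(\<integral>s. (\<Sum>j<n. z k \<omega> * z j \<omega> * indicator {max (a k) (a j)..<min (e k) (e j)} s) \<partial>lborel) =
       (\<Sum>j<n. (\<integral>s. z k \<omega> * z j \<omega> * indicator {max (a k) (a j)..<min (e k) (e j)} s \<partial>lborel))"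
        by (rule Bochner_Integration.integral_sum) (use i1 in blast)
      then show ?thesis by (simp only: e1)
    qed
    have "(\<integral>s. ?f s \<partial>lborel) = (\<Sum>k<n. (\<integral>s. (\<Sum>j<n. z k \<omega> * z j \<omega> * indicator {max (a k) (a j)..<min (e k) (e j)} s) \<partial>lborel))"
      by (rule Bochner_Integration.integral_sum) (intro Bochner_Integration.integrable_sum i1)
    then show ?thesis by (simp only: e2)
  qed
  moreover have nn: "\<And>s. 0 \<le> ?f s" by (metis fval_sq zero_le_power2)
  ultimately have "(\<integral>\<^sup>+s. ennreal (?f s) \<partial>lborel) = ennreal (\<Sum>k<n. \<Sum>j<n. z k \<omega> * z j \<omega> * ov (a k) (e k) (a j) (e j))"
    using nn_integral_eq_integral[OF int] by simp
  then show "(\<integral>\<^sup>+s. ennreal ((fval n a e z s \<omega>)\<^sup>2) \<partial>lborel) =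
     ennreal (\<Sum>k<n. \<Sum>j<n. z k \<omega> * z j \<omega> * ov (a k) (e k) (a j) (e j))"
    unfolding fval_sq .
  have "0 \<le> (\<integral>s. ?f s \<partial>lborel)" using nn by (simp add: integral_nonneg)
  then show "0 \<le> (\<Sum>k<n. \<Sum>j<n. z k \<omega> * z j \<omega> * ov (a k) (e k) (a j) (e j))"
    using \<open>(\<integral>s. ?f s \<partial>lborel) = _\<close> by simp
qed

lemma int_dsum:
  fixes f :: "nat \<Rightarrow> nat \<Rightarrow> 'a \<Rightarrow> real"
  assumes "\<And>k j. k < n \<Longrightarrow> j < n \<Longrightarrow> integrable M (f k j)"
  shows "integrable M (\<lambda>\<omega>. \<Sum>k<n. \<Sum>j<n. f k j \<omega>)"
    "(\<integral>\<omega>. (\<Sum>k<n. \<Sum>j<n. f k j \<omega>) \<partial>M) = (\<Sum>k<n. \<Sum>j<n. (\<integral>\<omega>. f k j \<omega> \<partial>M))"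
proof -
  have i: "integrable M (\<lambda>\<omega>. \<Sum>j<n. f k j \<omega>)" if "k < n" for k
    using assms that by (intro Bochner_Integration.integrable_sum) auto
  show "integrable M (\<lambda>\<omega>. \<Sum>k<n. \<Sum>j<n. f k j \<omega>)"
    using i assms by (intro Bochner_Integration.integrable_sum) auto
  have "(\<integral>\<omega>. (\<Sum>k<n. \<Sum>j<n. f k j \<omega>) \<partial>M) = (\<Sum>k<n. (\<integral>\<omega>. (\<Sum>j<n. f k j \<omega>) \<partial>M))"
    using i assms by (intro Bochner_Integration.integral_sum) auto
  also have "\<dots> = (\<Sum>k<n. \<Sum>j<n. (\<integral>\<omega>. f k j \<omega> \<partial>M))"
    by (intro sum.cong refl Bochner_Integration.integral_sum assms) auto
  finally show "(\<integral>\<omega>. (\<Sum>k<n. \<Sum>j<n. f k j \<omega>) \<partial>M) = (\<Sum>k<n. \<Sum>j<n. (\<integral>\<omega>. f k j \<omega> \<partial>M))" .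
qed

context wsetup
begin

lemma fint_sq: "(fint B n a e z \<omega>)\<^sup>2 =
  (\<Sum>k<n. \<Sum>j<n. (z k \<omega> * (B (e k) \<omega> - B (a k) \<omega>)) * (z j \<omega> * (B (e j) \<omega> - B (a j) \<omega>)))"
  unfolding fint_def power2_eq_square sum_product by simp

lemma valid_M: "valid n a e z \<Longrightarrow> k < n \<Longrightarrow> z k \<in> borel_measurable M"
  unfolding valid_def using Fmeas by blast

lemma ISO:
  assumes v: "valid n a e z"
  shows "integrable M (\<lambda>\<omega>. (fint B n a e z \<omega>)\<^sup>2)"
    "(\<integral>\<^sup>+\<omega>. (\<integral>\<^sup>+s. ennreal ((fval n a e z s \<omega>)\<^sup>2) \<partial>lborel) \<partial>M) =
       ennreal (\<integral>\<omega>. (fint B n a e z \<omega>)\<^sup>2 \<partial>M)"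
proof -
  have P: "integrable M (\<lambda>\<omega>. (z k \<omega> * (B (e k) \<omega> - B (a k) \<omega>)) * (z j \<omega> * (B (e j) \<omega> - B (a j) \<omega>))) \<and>
    (\<integral>\<omega>. (z k \<omega> * (B (e k) \<omega> - B (a k) \<omega>)) * (z j \<omega> * (B (e j) \<omega> - B (a j) \<omega>)) \<partial>M) =
       (\<integral>\<omega>. z k \<omega> * z j \<omega> \<partial>M) * ov (a k) (e k) (a j) (e j)" if "k < n" "j < n" for k j
    using v that unfolding valid_def by (intro pair) auto
  have Z: "integrable M (\<lambda>\<omega>. z k \<omega> * z j \<omega>)" if "k < n" "j < n" for k j
    using v that valid_M[OF v] unfolding valid_def by (intro L2prod) auto
  show I: "integrable M (\<lambda>\<omega>. (fint B n a e z \<omega>)\<^sup>2)"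
    unfolding fint_sq using P by (intro int_dsum) auto
  let ?Q = "\<lambda>\<omega>. \<Sum>k<n. \<Sum>j<n. z k \<omega> * z j \<omega> * ov (a k) (e k) (a j) (e j)"
  have QI: "integrable M ?Q" using Z by (intro int_dsum integrable_mult_left) auto
  have "(\<integral>\<^sup>+\<omega>. (\<integral>\<^sup>+s. ennreal ((fval n a e z s \<omega>)\<^sup>2) \<partial>lborel) \<partial>M) = (\<integral>\<^sup>+\<omega>. ennreal (?Q \<omega>) \<partial>M)"
    by (simp add: fval_inner)
  also have "\<dots> = ennreal (\<integral>\<omega>. ?Q \<omega> \<partial>M)"
    by (intro nn_integral_eq_integral QI AE_I2 fval_inner_nn)
  also have "(\<integral>\<omega>. ?Q \<omega> \<partial>M) = (\<Sum>k<n. \<Sum>j<n. (\<integral>\<omega>. z k \<omega> * z j \<omega> \<partial>M) * ov (a k) (e k) (a j) (e j))"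
    using Z by (subst int_dsum(2)) (auto intro: integrable_mult_left)
  also have "\<dots> = (\<Sum>k<n. \<Sum>j<n. (\<integral>\<omega>. (z k \<omega> * (B (e k) \<omega> - B (a k) \<omega>)) * (z j \<omega> * (B (e j) \<omega> - B (a j) \<omega>)) \<partial>M))"
    using P by simp
  also have "\<dots> = (\<integral>\<omega>. (fint B n a e z \<omega>)\<^sup>2 \<partial>M)"
    unfolding fint_sq using P by (subst int_dsum(2)) auto
  finally show "(\<integral>\<^sup>+\<omega>. (\<integral>\<^sup>+s. ennreal ((fval n a e z s \<omega>)\<^sup>2) \<partial>lborel) \<partial>M) =
       ennreal (\<integral>\<omega>. (fint B n a e z \<omega>)\<^sup>2 \<partial>M)" .
qed

end

lemma (in prob_space) doob:
  fixes X :: "nat \<Rightarrow> 'a \<Rightarrow> real" and G :: "nat \<Rightarrow> 'a measure"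
  assumes sub: "\<And>i. subalgebra M (G i)"
    and mono: "\<And>i j. i \<le> j \<Longrightarrow> sets (G i) \<subseteq> sets (G j)"
    and Xm: "\<And>i. i \<le> K \<Longrightarrow> X i \<in> borel_measurable (G i)"
    and Xi: "\<And>i. i \<le> K \<Longrightarrow> integrable M (\<lambda>\<omega>. (X i \<omega>)\<^sup>2)"
    and orth: "\<And>i Z. i \<le> K \<Longrightarrow> Z \<in> borel_measurable (G i) \<Longrightarrow> integrable M (\<lambda>\<omega>. (Z \<omega>)\<^sup>2) \<Longrightarrow>
       (\<integral>\<omega>. (X K \<omega> - X i \<omega>) * Z \<omega> \<partial>M) = 0"
    and lam: "0 < lv"
  shows "lv\<^sup>2 * prob {\<omega>\<in>space M. \<exists>i\<le>K. lv \<le> \<bar>X i \<omega>\<bar>} \<le> (\<integral>\<omega>. (X K \<omega>)\<^sup>2 \<partial>M)"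
proof -
  define A where "A k = {\<omega>\<in>space M. lv \<le> \<bar>X k \<omega>\<bar> \<and> (\<forall>j<k. \<bar>X j \<omega>\<bar> < lv)}" for k
  have spG: "space (G i) = space M" for i using sub[of i] unfolding subalgebra_def by simp
  have XmG: "X j \<in> borel_measurable (G k)" if "j \<le> k" "k \<le> K" for j k
    using measurable_from_subalg[of "G k" "G j", OF _ Xm] mono[OF that(1)] that spG
    unfolding subalgebra_def by auto
  have XM: "X i \<in> borel_measurable M" if "i \<le> K" for i
    using measurable_from_subalg[OF sub Xm[OF that]] .
  have AG: "A k \<in> sets (G k)" if "k \<le> K" for k
  proof -
    have "{\<omega>\<in>space (G k). lv \<le> \<bar>X k \<omega>\<bar> \<and> (\<forall>j<k. \<bar>X j \<omega>\<bar> < lv)} \<in> sets (G k)"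
      using XmG[OF order_refl that] XmG[OF less_imp_le _, OF _ that]
      by measurable
    then show ?thesis unfolding A_def spG .
  qed
  have AM: "A k \<in> sets M" if "k \<le> K" for k
    using AG[OF that] sub[of k] unfolding subalgebra_def by auto
  have disj: "disjoint_family_on A {..K}"
    unfolding disjoint_family_on_def A_def
    by (auto, metis linorder_neqE_nat not_less)
  have U: "{\<omega>\<in>space M. \<exists>i\<le>K. lv \<le> \<bar>X i \<omega>\<bar>} = (\<Union>k\<in>{..K}. A k)"
  proof (intro equalityI subsetI)
    fix \<omega> assume "\<omega> \<in> {\<omega>\<in>space M. \<exists>i\<le>K. lv \<le> \<bar>X i \<omega>\<bar>}"
    then obtain i where i: "\<omega> \<in> space M" "i \<le> K" "lv \<le> \<bar>X i \<omega>\<bar>" by auto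
    define k where "k = (LEAST i. lv \<le> \<bar>X i \<omega>\<bar>)"
    have k1: "lv \<le> \<bar>X k \<omega>\<bar>" unfolding k_def by (rule LeastI[of _ i]) (use i in auto)
    have k2: "k \<le> i" unfolding k_def by (rule Least_le) (use i in auto)
    have k3: "\<bar>X j \<omega>\<bar> < lv" if "j < k" for j
      using not_less_Least[OF that[unfolded k_def]] by simp
    show "\<omega> \<in> (\<Union>k\<in>{..K}. A k)" using i k1 k2 k3 unfolding A_def by auto
  qed (auto simp: A_def)
  have L2: "integrable M (\<lambda>\<omega>. X i \<omega> * X j \<omega>)" if "i \<le> K" "j \<le> K" for i j
    by (rule L2prod) (use XM Xi that in auto)
  have XKint: "integrable M (\<lambda>\<omega>. (X K \<omega>)\<^sup>2 * indicator (A k) \<omega>)" if "k \<le> K" for k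
    using Xi[of K] AM[OF that] by (intro integrable_real_mult_indicator) auto
  have key: "lv\<^sup>2 * prob (A k) \<le> (\<integral>\<omega>. (X K \<omega>)\<^sup>2 * indicator (A k) \<omega> \<partial>M)" if kK: "k \<le> K" for k
  proof -
    have Xkint: "integrable M (\<lambda>\<omega>. (X k \<omega>)\<^sup>2 * indicator (A k) \<omega>)"
      using Xi[OF kK] AM[OF kK] by (intro integrable_real_mult_indicator) auto
    have "lv\<^sup>2 * prob (A k) = (\<integral>\<omega>. lv\<^sup>2 * indicator (A k) \<omega> \<partial>M)"
      using AM[OF kK] by simp
    also have "\<dots> \<le> (\<integral>\<omega>. (X k \<omega>)\<^sup>2 * indicator (A k) \<omega> \<partial>M)"
    proof (rule integral_mono)
      show "integrable M (\<lambda>\<omega>. lv\<^sup>2 * indicator (A k) \<omega>)" using AM[OF kK]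
        by (intro integrable_mult_right integrable_real_indicator) (auto simp: less_top[symmetric])
      show "integrable M (\<lambda>\<omega>. (X k \<omega>)\<^sup>2 * indicator (A k) \<omega>)" by fact
      fix \<omega> show "lv\<^sup>2 * indicator (A k) \<omega> \<le> (X k \<omega>)\<^sup>2 * indicator (A k) \<omega>"
      proof (cases "\<omega> \<in> A k")
        case True
        then have "lv \<le> \<bar>X k \<omega>\<bar>" unfolding A_def by auto
        then have "lv\<^sup>2 \<le> \<bar>X k \<omega>\<bar>\<^sup>2" using lam by (intro power_mono) auto
        then show ?thesis using True by simp
      qed simp
    qed
    also have "\<dots> \<le> (\<integral>\<omega>. (X K \<omega>)\<^sup>2 * indicator (A k) \<omega> \<partial>M)"
    proof -
      define Z where "Z \<omega> = X k \<omega> * indicator (A k) \<omega>" for \<omega>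
      have Zm: "Z \<in> borel_measurable (G k)" unfolding Z_def
        using XmG[OF order_refl kK] AG[OF kK] by measurable
      have Zsq: "(\<lambda>\<omega>. (Z \<omega>)\<^sup>2) = (\<lambda>\<omega>. (X k \<omega>)\<^sup>2 * indicator (A k) \<omega>)"
        unfolding Z_def by (auto simp: fun_eq_iff indicator_def)
      have o: "(\<integral>\<omega>. (X K \<omega> - X k \<omega>) * Z \<omega> \<partial>M) = 0"
        using orth[OF kK Zm] Zsq Xkint by simp
      have ZM: "Z \<in> borel_measurable M" using measurable_from_subalg[OF sub Zm] .
      have oi: "integrable M (\<lambda>\<omega>. (X K \<omega> - X k \<omega>) * Z \<omega>)"
      proof (rule L2prod)
        show "integrable M (\<lambda>\<omega>. (X K \<omega> - X k \<omega>)\<^sup>2)"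
          using Xi[of K] Xi[OF kK] L2[OF order_refl kK]
          by (auto simp: power2_diff mult.assoc intro!: Bochner_Integration.integrable_diff Bochner_Integration.integrable_add integrable_mult_right)
      qed (use XM kK ZM Zsq Xkint in auto)
      have d: "integrable M (\<lambda>\<omega>. (X K \<omega> - X k \<omega>)\<^sup>2 * indicator (A k) \<omega>)"
        using Xi[of K] Xi[OF kK] L2[OF order_refl kK] AM[OF kK]
        by (intro integrable_real_mult_indicator) (auto simp: power2_diff mult.assoc intro!: Bochner_Integration.integrable_diff Bochner_Integration.integrable_add integrable_mult_right)
      have eq: "(\<lambda>\<omega>. (X K \<omega>)\<^sup>2 * indicator (A k) \<omega>) = (\<lambda>\<omega>. (X k \<omega>)\<^sup>2 * indicator (A k) \<omega> +
           (X K \<omega> - X k \<omega>)\<^sup>2 * indicator (A k) \<omega> + 2 * ((X K \<omega> - X k \<omega>) * Z \<omega>))"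
        unfolding Z_def by (auto simp: fun_eq_iff indicator_def power2_eq_square algebra_simps)
      have "(\<integral>\<omega>. (X K \<omega>)\<^sup>2 * indicator (A k) \<omega> \<partial>M) = (\<integral>\<omega>. (X k \<omega>)\<^sup>2 * indicator (A k) \<omega> \<partial>M) +
           (\<integral>\<omega>. (X K \<omega> - X k \<omega>)\<^sup>2 * indicator (A k) \<omega> \<partial>M) + 2 * (\<integral>\<omega>. (X K \<omega> - X k \<omega>) * Z \<omega> \<partial>M)"
        unfolding eq using Xkint d oi by simp
      moreover have "0 \<le> (\<integral>\<omega>. (X K \<omega> - X k \<omega>)\<^sup>2 * indicator (A k) \<omega> \<partial>M)"
        by (intro integral_nonneg_AE) auto
      ultimately show ?thesis using o by simp
    qed
    finally show ?thesis .
  qed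
  have "lv\<^sup>2 * prob {\<omega>\<in>space M. \<exists>i\<le>K. lv \<le> \<bar>X i \<omega>\<bar>} = (\<Sum>k\<le>K. lv\<^sup>2 * prob (A k))"
    unfolding U using AM disj
    by (subst finite_measure_finite_Union) (auto simp: sum_distrib_left)
  also have "\<dots> \<le> (\<Sum>k\<le>K. (\<integral>\<omega>. (X K \<omega>)\<^sup>2 * indicator (A k) \<omega> \<partial>M))"
    using key by (intro sum_mono) auto
  also have "\<dots> = (\<integral>\<omega>. (\<Sum>k\<le>K. (X K \<omega>)\<^sup>2 * indicator (A k) \<omega>) \<partial>M)"
    using XKint by (subst Bochner_Integration.integral_sum) auto
  also have "\<dots> = (\<integral>\<omega>. (X K \<omega>)\<^sup>2 * indicator (\<Union>k\<in>{..K}. A k) \<omega> \<partial>M)"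
    by (subst indicator_UN_disjoint[OF _ disj]) (auto simp: sum_distrib_left)
  also have "\<dots> \<le> (\<integral>\<omega>. (X K \<omega>)\<^sup>2 \<partial>M)"
  proof (rule integral_mono)
    show "integrable M (\<lambda>\<omega>. (X K \<omega>)\<^sup>2 * indicator (\<Union>k\<in>{..K}. A k) \<omega>)"
      using Xi[of K] AM by (intro integrable_real_mult_indicator) auto
  qed (use Xi[of K] in \<open>auto simp: indicator_def\<close>)
  finally show ?thesis .
qed

definition rest :: "real \<Rightarrow> (nat \<Rightarrow> real) \<Rightarrow> (nat \<Rightarrow> real) \<Rightarrow> nat \<Rightarrow> real" where
  "rest u a e = (\<lambda>k. max (a k) (min (e k) u))"

lemma fval_rest: "fval n a (rest u a e) z s \<omega> = (if s < u then fval n a e z s \<omega> else 0)"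
proof (cases "s < u")
  case True then show ?thesis unfolding fval_def rest_def by (auto intro!: sum.cong)
next
  case False then show ?thesis unfolding fval_def rest_def by (auto intro!: sum.neutral)
qed

context wsetup
begin

lemma valid_rest: "valid n a e z \<Longrightarrow> valid n a (rest u a e) z"
  unfolding valid_def rest_def by auto

lemma fint_rest_meas:
  assumes v: "valid n a e z" and u: "0 \<le> u"
  shows "fint B n a (rest u a e) z \<in> borel_measurable (F u)"
  unfolding fint_def
proof (rule borel_measurable_sum)
  fix k assume "k \<in> {..<n}"
  then have k: "0 \<le> a k" "a k \<le> e k" "z k \<in> borel_measurable (F (a k))"
    using v unfolding valid_def by auto
  show "(\<lambda>\<omega>. z k \<omega> * (B (rest u a e k) \<omega> - B (a k) \<omega>)) \<in> borel_measurable (F u)"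
  proof (cases "a k \<le> u")
    case True
    have r: "0 \<le> rest u a e k" "rest u a e k \<le> u" unfolding rest_def using True k by auto
    show ?thesis using Fmono[OF True k(3)] Bmeas[OF r] Bmeas[OF k(1) True] by measurable
  next
    case False
    then have "rest u a e k = a k" unfolding rest_def by auto
    then show ?thesis by simp
  qed
qed

lemma mart_term:
  assumes v: "valid n a e z" and k: "k < n" and u: "0 \<le> u" "u \<le> v'"
    and Z: "Z \<in> borel_measurable (F u)" "integrable M (\<lambda>\<omega>. (Z \<omega>)\<^sup>2)"
  shows "integrable M (\<lambda>\<omega>. (z k \<omega> * Z \<omega>) * (B (rest v' a e k) \<omega> - B (rest u a e k) \<omega>)) \<and>
    (\<integral>\<omega>. (z k \<omega> * Z \<omega>) * (B (rest v' a e k) \<omega> - B (rest u a e k) \<omega>) \<partial>M) = 0"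
proof -
  have kk: "0 \<le> a k" "a k \<le> e k" "z k \<in> borel_measurable (F (a k))" "integrable M (\<lambda>\<omega>. (z k \<omega>)\<^sup>2)"
    using v k unfolding valid_def by auto
  have Yi: "integrable M (\<lambda>\<omega>. z k \<omega> * Z \<omega>)"
    by (rule L2prod) (use kk Z Fmeas in auto)
  show ?thesis
  proof (cases "u \<le> a k")
    case True
    have r1: "rest u a e k = a k" unfolding rest_def using True by auto
    have r2: "a k \<le> rest v' a e k" unfolding rest_def by auto
    have Ym: "(\<lambda>\<omega>. z k \<omega> * Z \<omega>) \<in> borel_measurable (F (a k))"
      using kk(3) Fmono[OF True Z(1)] by measurable
    show ?thesis unfolding r1 using zero_lemma[OF kk(1) r2 Ym Yi] by simp
  next
    case False
    show ?thesis
    proof (cases "e k \<le> u")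
      case True
      then have "rest u a e k = rest v' a e k" unfolding rest_def using u kk by auto
      then show ?thesis by simp
    next
      case False2: False
      have r1: "rest u a e k = u" unfolding rest_def using False False2 by auto
      have r2: "u \<le> rest v' a e k" unfolding rest_def using False2 u by auto
      have Ym: "(\<lambda>\<omega>. z k \<omega> * Z \<omega>) \<in> borel_measurable (F u)"
      proof -
        have "a k \<le> u" using False by simp
        then show ?thesis using Fmono[OF _ kk(3)] Z(1) by measurable
      qed
      show ?thesis unfolding r1 using zero_lemma[OF u(1) r2 Ym Yi] by simp
    qed
  qed
qed

lemma mart:
  assumes v: "valid n a e z" and u: "0 \<le> u" "u \<le> v'"
    and Z: "Z \<in> borel_measurable (F u)" "integrable M (\<lambda>\<omega>. (Z \<omega>)\<^sup>2)"
  shows "(\<integral>\<omega>. (fint B n a (rest v' a e) z \<omega> - fint B n a (rest u a e) z \<omega>) * Z \<omega> \<partial>M) = 0"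
proof -
  have eq: "(\<lambda>\<omega>. (fint B n a (rest v' a e) z \<omega> - fint B n a (rest u a e) z \<omega>) * Z \<omega>) =
     (\<lambda>\<omega>. \<Sum>k<n. (z k \<omega> * Z \<omega>) * (B (rest v' a e k) \<omega> - B (rest u a e k) \<omega>))"
    unfolding fint_def sum_subtractf[symmetric] sum_distrib_right
    by (intro ext sum.cong refl) (simp add: algebra_simps)
  show ?thesis unfolding eq
    using mart_term[OF v _ u Z] by (subst Bochner_Integration.integral_sum) auto
qed

lemma doob_simple:
  fixes u :: "nat \<Rightarrow> real"
  assumes v: "valid n a e z" and u0: "0 \<le> u 0" and um: "mono u" and lv: "0 < lv"
  shows "lv\<^sup>2 * prob {\<omega>\<in>space M. \<exists>i\<le>K. lv \<le> \<bar>fint B n a (rest (u i) a e) z \<omega>\<bar>}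
     \<le> (\<integral>\<omega>. (fint B n a (rest (u K) a e) z \<omega>)\<^sup>2 \<partial>M)"
proof (rule doob[where G="\<lambda>i. F (u i)"])
  have up: "0 \<le> u i" for i using u0 um[THEN monoD, of 0 i] by auto
  show "subalgebra M (F (u i))" for i by (rule subalg)
  show "sets (F (u i)) \<subseteq> sets (F (u j))" if "i \<le> j" for i j
    using filtration.sets_F_mono[OF filt] um[THEN monoD, OF that] by auto
  show "fint B n a (rest (u i) a e) z \<in> borel_measurable (F (u i))" for i
    using fint_rest_meas[OF v up] .
  show "integrable M (\<lambda>\<omega>. (fint B n a (rest (u i) a e) z \<omega>)\<^sup>2)" for i
    using ISO(1)[OF valid_rest[OF v]] .
  show "(\<integral>\<omega>. (fint B n a (rest (u K) a e) z \<omega> - fint B n a (rest (u i) a e) z \<omega>) * Z \<omega> \<partial>M) = 0"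
    if "i \<le> K" "Z \<in> borel_measurable (F (u i))" "integrable M (\<lambda>\<omega>. (Z \<omega>)\<^sup>2)" for i Z
    using mart[OF v up um[THEN monoD, OF that(1)] that(2,3)] .
qed (rule lv)

end

lemma sum_split_add: "(\<Sum>k<(n1::nat)+n2. f k) = (\<Sum>k<n1. f k) + (\<Sum>k<n2. f (n1 + k))"
  by (induction n2) (auto simp: add.assoc)

definition cat :: "nat \<Rightarrow> (nat \<Rightarrow> 'b) \<Rightarrow> (nat \<Rightarrow> 'b) \<Rightarrow> nat \<Rightarrow> 'b" where
  "cat n1 f g = (\<lambda>k. if k < n1 then f k else g (k - n1))"

lemma fval_cat: "fval (n1 + n2) (cat n1 a1 a2) (cat n1 e1 e2) (cat n1 z1 (\<lambda>k \<omega>. - z2 k \<omega>)) s \<omega> =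
    fval n1 a1 e1 z1 s \<omega> - fval n2 a2 e2 z2 s \<omega>"
  unfolding fval_def sum_split_add cat_def by (simp add: sum_negf[symmetric] if_distrib cong: if_cong)

lemma fint_cat: "fint B (n1 + n2) (cat n1 a1 a2) (cat n1 e1 e2) (cat n1 z1 (\<lambda>k \<omega>. - z2 k \<omega>)) \<omega> =
    fint B n1 a1 e1 z1 \<omega> - fint B n2 a2 e2 z2 \<omega>"
  unfolding fint_def sum_split_add cat_def by (simp add: sum_negf[symmetric])

lemma fval_neg: "(\<forall>k<n. 0 \<le> a k) \<Longrightarrow> s < 0 \<Longrightarrow> fval n a e z s \<omega> = 0"
  unfolding fval_def by (intro sum.neutral) force

lemma fval_big: "(\<forall>k<n. e k \<le> T) \<Longrightarrow> T \<le> s \<Longrightarrow> fval n a e z s \<omega> = 0"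
  unfolding fval_def by (intro sum.neutral) force

lemma sq_tri: "((x::real) - y)\<^sup>2 \<le> 2 * (x - z)\<^sup>2 + 2 * (z - y)\<^sup>2"
proof -
  have "0 \<le> ((x - z) - (z - y))\<^sup>2" by simp
  then show ?thesis by (simp add: power2_eq_square algebra_simps)
qed

lemma enn_tri: "ennreal (((x::real) - y)\<^sup>2) \<le> 2 * ennreal ((x - z)\<^sup>2) + 2 * ennreal ((z - y)\<^sup>2)"
proof -
  have "ennreal ((x - y)\<^sup>2) \<le> ennreal (2 * (x - z)\<^sup>2 + 2 * (z - y)\<^sup>2)"
    using sq_tri by (rule ennreal_leI)
  also have "\<dots> = 2 * ennreal ((x - z)\<^sup>2) + 2 * ennreal ((z - y)\<^sup>2)"
    by (simp add: ennreal_plus ennreal_mult)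
  finally show ?thesis .
qed

lemma le_tendsto0:
  fixes x y :: "nat \<Rightarrow> ennreal"
  assumes "\<And>m. x m \<le> y m" "y \<longlonglongrightarrow> 0"
  shows "x \<longlonglongrightarrow> 0"
  by (rule tendsto_sandwich[of "\<lambda>_. 0" x sequentially y]) (use assms in auto)

lemma sp_bounds:
  assumes sp: "simple_process M F T n tk \<xi>" and k: "k \<le> n"
  shows "0 \<le> tk k \<and> tk k \<le> T"
proof -
  have inc: "\<And>k. k < n \<Longrightarrow> tk k < tk (Suc k)" and t0: "tk 0 = 0" and tn: "tk n = T"
    using sp unfolding simple_process_def by auto
  have a: "k \<le> n \<longrightarrow> 0 \<le> tk k" for k
  proof (induction k)
    case 0 then show ?case using t0 by simp
  next
    case (Suc k) then show ?case using inc[of k] by auto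
  qed
  have b: "k + j \<le> n \<longrightarrow> tk k \<le> tk (k + j)" for j
  proof (induction j)
    case 0 then show ?case by simp
  next
    case (Suc j) then show ?case using inc[of "k + j"] by auto
  qed
  from b[of "n - k"] k tn have "tk k \<le> T" by simp
  with a[of k] k show ?thesis by simp
qed

lemma sv_eq: "simple_val n tk \<xi> = fval n tk (\<lambda>k. tk (Suc k)) \<xi>"
  unfolding simple_val_def fval_def by (intro ext) simp

lemma si_eq: "simple_int B n tk \<xi> = fint B n tk (\<lambda>k. tk (Suc k)) \<xi>"
  unfolding simple_int_def fint_def by (intro ext) simp

context wsetup
begin

lemma sp_valid:
  assumes sp: "simple_process M F T n tk \<xi>"
  shows "valid n tk (\<lambda>k. tk (Suc k)) \<xi>"
  unfolding valid_def
proof (intro allI impI conjI)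
  fix k assume k: "k < n"
  show "0 \<le> tk k" using sp_bounds[OF sp, of k] k by simp
  show "tk k \<le> tk (Suc k)" using sp k unfolding simple_process_def by (simp add: less_imp_le)
  show "\<xi> k \<in> borel_measurable (F (tk k))" "integrable M (\<lambda>\<omega>. (\<xi> k \<omega>)\<^sup>2)"
    using sp k unfolding simple_process_def by auto
qed

lemma valid_cat:
  assumes "valid n1 a1 e1 z1" "valid n2 a2 e2 z2"
  shows "valid (n1 + n2) (cat n1 a1 a2) (cat n1 e1 e2) (cat n1 z1 (\<lambda>k \<omega>. - z2 k \<omega>))"
  unfolding valid_def
proof (intro allI impI)
  fix k assume k: "k < n1 + n2"
  show "0 \<le> cat n1 a1 a2 k \<and> cat n1 a1 a2 k \<le> cat n1 e1 e2 k \<and>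
         cat n1 z1 (\<lambda>k \<omega>. - z2 k \<omega>) k \<in> borel_measurable (F (cat n1 a1 a2 k)) \<and>
         integrable M (\<lambda>\<omega>. (cat n1 z1 (\<lambda>k \<omega>. - z2 k \<omega>) k \<omega>)\<^sup>2)"
  proof (cases "k < n1")
    case True then show ?thesis using assms unfolding valid_def cat_def by auto
  next
    case False
    then have "k - n1 < n2" using k by simp
    then show ?thesis using assms False unfolding valid_def cat_def by auto
  qed
qed

lemma idMF: "(\<lambda>x. x) \<in> measurable M (F t)"
  unfolding measurable_def using subs spF sets.sets_into_space[of _ "F t"]
  by (auto simp: Int_absorb2)

lemma fint_M: "valid n a e z \<Longrightarrow> fint B n a e z \<in> borel_measurable M"
  unfolding fint_def
proof (intro borel_measurable_sum)
  fix k assume v: "valid n a e z" and "k \<in> {..<n}"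
  then have k: "0 \<le> a k" "a k \<le> e k" "z k \<in> borel_measurable M" using valid_M[OF v] unfolding valid_def by auto
  show "(\<lambda>\<omega>. z k \<omega> * (B (e k) \<omega> - B (a k) \<omega>)) \<in> borel_measurable M"
    using k(3) BM[OF k(1)] BM[OF order_trans[OF k(1,2)]] by measurable
qed

lemma fval_joint:
  assumes "valid n a e z"
  shows "(\<lambda>(\<omega>, s). fval n a e z s \<omega>) \<in> borel_measurable (M \<Otimes>\<^sub>M lborel)"
proof -
  have zm: "k < n \<Longrightarrow> z k \<in> borel_measurable M" for k using valid_M[OF assms] .
  have "(\<lambda>p. \<Sum>k<n. if a k \<le> snd p \<and> snd p < e k then z k (fst p) else 0) \<in> borel_measurable (M \<Otimes>\<^sub>M lborel)"
  proof (intro borel_measurable_sum)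
    fix k assume "k \<in> {..<n}"
    then have [measurable]: "z k \<in> borel_measurable M" using zm by auto
    show "(\<lambda>x. if a k \<le> snd x \<and> snd x < e k then z k (fst x) else 0) \<in> borel_measurable (M \<Otimes>\<^sub>M lborel)"
      by measurable
  qed
  then show ?thesis by (simp add: fval_def split_beta')
qed

end

locale isetup = wsetup +
  fixes b I :: "real \<Rightarrow> 'a \<Rightarrow> real"
  assumes prog: "progressive F b"
    and Iint: "\<And>T. 0 \<le> T \<Longrightarrow> ito_integral_at M F B b T (I T)"
begin

definition bj :: "real \<Rightarrow> 'a \<Rightarrow> real \<Rightarrow> real" where
  "bj T \<omega> s = (if s \<in> {0..T} then b s \<omega> else 0)"

lemma bj_meas:
  assumes T: "0 \<le> T"
  shows "(\<lambda>(\<omega>, s). bj T \<omega> s) \<in> borel_measurable (M \<Otimes>\<^sub>M lborel)"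
proof -
  have g: "(\<lambda>(s, \<omega>). b s \<omega>) \<in> borel_measurable (restrict_space borel {0..T} \<Otimes>\<^sub>M F T)"
    using prog T unfolding progressive_def by auto
  define c where "c s = max 0 (min T s)" for s :: real
  have c1: "(\<lambda>p. c (snd p)) \<in> measurable (M \<Otimes>\<^sub>M lborel) (restrict_space borel {0..T})"
    by (rule measurable_restrict_space2) (auto simp: c_def T)
  have c2: "(\<lambda>p. fst p) \<in> measurable (M \<Otimes>\<^sub>M lborel) (F T)"
    by (rule measurable_compose[OF measurable_fst idMF])
  have phi: "(\<lambda>p. (c (snd p), fst p)) \<in> measurable (M \<Otimes>\<^sub>M lborel) (restrict_space borel {0..T} \<Otimes>\<^sub>M F T)"
    by (rule measurable_Pair[OF c1 c2])
  have h: "(\<lambda>p. b (c (snd p)) (fst p)) \<in> borel_measurable (M \<Otimes>\<^sub>M lborel)"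
    using measurable_compose[OF phi g] by simp
  have "(\<lambda>p. indicator {0..T} (snd p) * b (c (snd p)) (fst p)) \<in> borel_measurable (M \<Otimes>\<^sub>M lborel)"
    using h by measurable
  moreover have "(\<lambda>(\<omega>, s). bj T \<omega> s) = (\<lambda>p. indicator {0..T} (snd p) * b (c (snd p)) (fst p))"
    by (auto simp: fun_eq_iff bj_def c_def indicator_def)
  ultimately show ?thesis by simp
qed

end

lemma nn2:
  assumes "f \<in> borel_measurable N" "g \<in> borel_measurable N"
  shows "(\<integral>\<^sup>+x. 2 * f x + 2 * g x \<partial>N) = 2 * (\<integral>\<^sup>+x. f x \<partial>N) + 2 * (\<integral>\<^sup>+x. g x \<partial>N)"
  using assms by (simp add: nn_integral_add nn_integral_cmult)

context isetup
begin

lemma err_joint: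
  assumes v: "valid n a e z" and T: "0 \<le> T"
  shows "(\<lambda>(\<omega>, s). ennreal ((fval n a e z s \<omega> - b s \<omega>)\<^sup>2) * indicator {0..T} s) \<in> borel_measurable (M \<Otimes>\<^sub>M lborel)"
proof -
  have [measurable]: "(\<lambda>(\<omega>, s). fval n a e z s \<omega>) \<in> borel_measurable (M \<Otimes>\<^sub>M lborel)" using fval_joint[OF v] .
  have [measurable]: "(\<lambda>(\<omega>, s). bj T \<omega> s) \<in> borel_measurable (M \<Otimes>\<^sub>M lborel)" using bj_meas[OF T] .
  have "(\<lambda>p. ennreal (((\<lambda>(\<omega>, s). fval n a e z s \<omega>) p - (\<lambda>(\<omega>, s). bj T \<omega> s) p)\<^sup>2) * indicator {0..T} (snd p))
     \<in> borel_measurable (M \<Otimes>\<^sub>M lborel)" by measurable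
  moreover have "(\<lambda>(\<omega>, s). ennreal ((fval n a e z s \<omega> - b s \<omega>)\<^sup>2) * indicator {0..T} s) =
    (\<lambda>p. ennreal (((\<lambda>(\<omega>, s). fval n a e z s \<omega>) p - (\<lambda>(\<omega>, s). bj T \<omega> s) p)\<^sup>2) * indicator {0..T} (snd p))"
    by (auto simp: fun_eq_iff bj_def indicator_def)
  ultimately show ?thesis by simp
qed

lemma err_meas:
  assumes v: "valid n a e z" and T: "0 \<le> T"
  shows "(\<lambda>\<omega>. \<integral>\<^sup>+s\<in>{0..T}. ennreal ((fval n a e z s \<omega> - b s \<omega>)\<^sup>2) \<partial>lborel) \<in> borel_measurable M"
  using lborel.borel_measurable_nn_integral[of "\<lambda>\<omega> s. ennreal ((fval n a e z s \<omega> - b s \<omega>)\<^sup>2) * indicator {0..T} s" M]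
    err_joint[OF v T] by simp

lemma err_s:
  assumes v: "valid n a e z" and T: "0 \<le> T" and \<omega>: "\<omega> \<in> space M"
  shows "(\<lambda>s. ennreal ((fval n a e z s \<omega> - b s \<omega>)\<^sup>2) * indicator {0..T} s) \<in> borel_measurable lborel"
  using measurable_Pair2[OF err_joint[OF v T] \<omega>] by simp

lemma cmp_bound:
  assumes u: "0 \<le> u" "u \<le> T"
    and v1: "valid n1 a1 e1 z1" "\<forall>k<n1. e1 k \<le> T"
    and v2: "valid n2 a2 e2 z2" "\<forall>k<n2. e2 k \<le> u"
  shows "(\<integral>\<^sup>+\<omega>. (\<integral>\<^sup>+s. ennreal ((fval n1 a1 (rest u a1 e1) z1 s \<omega> - fval n2 a2 e2 z2 s \<omega>)\<^sup>2) \<partial>lborel) \<partial>M)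
    \<le> 2 * (\<integral>\<^sup>+\<omega>. (\<integral>\<^sup>+s\<in>{0..T}. ennreal ((fval n1 a1 e1 z1 s \<omega> - b s \<omega>)\<^sup>2) \<partial>lborel) \<partial>M)
      + 2 * (\<integral>\<^sup>+\<omega>. (\<integral>\<^sup>+s\<in>{0..u}. ennreal ((fval n2 a2 e2 z2 s \<omega> - b s \<omega>)\<^sup>2) \<partial>lborel) \<partial>M)"
proof -
  have T: "0 \<le> T" using u by simp
  have a1: "\<forall>k<n1. 0 \<le> a1 k" using v1 unfolding valid_def by auto
  have a2: "\<forall>k<n2. 0 \<le> a2 k" using v2 unfolding valid_def by auto
  have pw: "ennreal ((fval n1 a1 (rest u a1 e1) z1 s \<omega> - fval n2 a2 e2 z2 s \<omega>)\<^sup>2) \<le>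
     2 * (ennreal ((fval n1 a1 e1 z1 s \<omega> - b s \<omega>)\<^sup>2) * indicator {0..T} s) +
     2 * (ennreal ((fval n2 a2 e2 z2 s \<omega> - b s \<omega>)\<^sup>2) * indicator {0..u} s)" for s \<omega>
  proof (cases "0 \<le> s \<and> s < u")
    case True
    then have "s \<in> {0..T}" "s \<in> {0..u}" using u by auto
    then show ?thesis using True enn_tri[of "fval n1 a1 e1 z1 s \<omega>" "fval n2 a2 e2 z2 s \<omega>" "b s \<omega>"]
      by (simp add: fval_rest power2_commute)
  next
    case False
    have "fval n1 a1 (rest u a1 e1) z1 s \<omega> = 0"
      using False fval_neg[OF a1, of s] by (auto simp: fval_rest)
    moreover have "fval n2 a2 e2 z2 s \<omega> = 0"
      using False fval_neg[OF a2, of s] fval_big[OF v2(2), of s] by auto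
    ultimately show ?thesis by simp
  qed
  have inner: "(\<integral>\<^sup>+s. ennreal ((fval n1 a1 (rest u a1 e1) z1 s \<omega> - fval n2 a2 e2 z2 s \<omega>)\<^sup>2) \<partial>lborel) \<le>
      2 * (\<integral>\<^sup>+s\<in>{0..T}. ennreal ((fval n1 a1 e1 z1 s \<omega> - b s \<omega>)\<^sup>2) \<partial>lborel) +
      2 * (\<integral>\<^sup>+s\<in>{0..u}. ennreal ((fval n2 a2 e2 z2 s \<omega> - b s \<omega>)\<^sup>2) \<partial>lborel)" if \<omega>: "\<omega> \<in> space M" for \<omega>
  proof -
    have "(\<integral>\<^sup>+s. ennreal ((fval n1 a1 (rest u a1 e1) z1 s \<omega> - fval n2 a2 e2 z2 s \<omega>)\<^sup>2) \<partial>lborel) \<le>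
      (\<integral>\<^sup>+s. 2 * (ennreal ((fval n1 a1 e1 z1 s \<omega> - b s \<omega>)\<^sup>2) * indicator {0..T} s) +
     2 * (ennreal ((fval n2 a2 e2 z2 s \<omega> - b s \<omega>)\<^sup>2) * indicator {0..u} s) \<partial>lborel)"
      by (intro nn_integral_mono pw)
    also have "\<dots> = 2 * (\<integral>\<^sup>+s\<in>{0..T}. ennreal ((fval n1 a1 e1 z1 s \<omega> - b s \<omega>)\<^sup>2) \<partial>lborel) +
      2 * (\<integral>\<^sup>+s\<in>{0..u}. ennreal ((fval n2 a2 e2 z2 s \<omega> - b s \<omega>)\<^sup>2) \<partial>lborel)"
      by (rule nn2[OF err_s[OF v1(1) T \<omega>] err_s[OF v2(1) u(1) \<omega>]])
    finally show ?thesis .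
  qed
  have "(\<integral>\<^sup>+\<omega>. (\<integral>\<^sup>+s. ennreal ((fval n1 a1 (rest u a1 e1) z1 s \<omega> - fval n2 a2 e2 z2 s \<omega>)\<^sup>2) \<partial>lborel) \<partial>M)
    \<le> (\<integral>\<^sup>+\<omega>. 2 * (\<integral>\<^sup>+s\<in>{0..T}. ennreal ((fval n1 a1 e1 z1 s \<omega> - b s \<omega>)\<^sup>2) \<partial>lborel) +
      2 * (\<integral>\<^sup>+s\<in>{0..u}. ennreal ((fval n2 a2 e2 z2 s \<omega> - b s \<omega>)\<^sup>2) \<partial>lborel) \<partial>M)"
    by (intro nn_integral_mono inner)
  also have "\<dots> = 2 * (\<integral>\<^sup>+\<omega>. (\<integral>\<^sup>+s\<in>{0..T}. ennreal ((fval n1 a1 e1 z1 s \<omega> - b s \<omega>)\<^sup>2) \<partial>lborel) \<partial>M)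
      + 2 * (\<integral>\<^sup>+\<omega>. (\<integral>\<^sup>+s\<in>{0..u}. ennreal ((fval n2 a2 e2 z2 s \<omega> - b s \<omega>)\<^sup>2) \<partial>lborel) \<partial>M)"
    by (rule nn2[OF err_meas[OF v1(1) T] err_meas[OF v2(1) u(1)]])
  finally show ?thesis .
qed

lemma L2_enn:
  assumes "integrable M (\<lambda>\<omega>. (f \<omega>)\<^sup>2)"
  shows "(\<integral>\<^sup>+\<omega>. ennreal ((f \<omega>)\<^sup>2) \<partial>M) = ennreal (\<integral>\<omega>. (f \<omega>)\<^sup>2 \<partial>M)"
  using assms by (intro nn_integral_eq_integral) auto

lemma sp_e_le:
  assumes "simple_process M F T n tk \<xi>"
  shows "\<forall>k<n. tk (Suc k) \<le> T"
  using sp_bounds[OF assms] by auto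

lemma ident:
  assumes u: "0 \<le> u" "u \<le> T"
    and sp: "\<And>m. simple_process M F T (n m) (tk m) (\<xi> m)"
    and A: "(\<lambda>m. \<integral>\<^sup>+\<omega>. (\<integral>\<^sup>+s\<in>{0..T}. ennreal ((simple_val (n m) (tk m) (\<xi> m) s \<omega> - b s \<omega>)\<^sup>2) \<partial>lborel) \<partial>M) \<longlonglongrightarrow> 0"
  shows "(\<lambda>m. \<integral>\<^sup>+\<omega>. ennreal ((I u \<omega> - fint B (n m) (tk m) (rest u (tk m) (\<lambda>k. tk m (Suc k))) (\<xi> m) \<omega>)\<^sup>2) \<partial>M) \<longlonglongrightarrow> 0"
proof -
  from Iint[OF u(1)] obtain n' tk' \<eta> where
    Iu: "I u \<in> borel_measurable M" and
    sp': "\<And>m. simple_process M F u (n' m) (tk' m) (\<eta> m)" and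
    C: "(\<lambda>m. \<integral>\<^sup>+\<omega>. (\<integral>\<^sup>+s\<in>{0..u}. ennreal ((simple_val (n' m) (tk' m) (\<eta> m) s \<omega> - b s \<omega>)\<^sup>2) \<partial>lborel) \<partial>M) \<longlonglongrightarrow> 0" and
    X: "(\<lambda>m. \<integral>\<^sup>+\<omega>. ennreal ((I u \<omega> - simple_int B (n' m) (tk' m) (\<eta> m) \<omega>)\<^sup>2) \<partial>M) \<longlonglongrightarrow> 0"
    unfolding ito_integral_at_def by blast
  define JR where "JR m = fint B (n m) (tk m) (rest u (tk m) (\<lambda>k. tk m (Suc k))) (\<xi> m)" for m
  define JW where "JW m = fint B (n' m) (tk' m) (\<lambda>k. tk' m (Suc k)) (\<eta> m)" for m
  have v1: "valid (n m) (tk m) (\<lambda>k. tk m (Suc k)) (\<xi> m)" for m using sp_valid[OF sp] .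
  have v2: "valid (n' m) (tk' m) (\<lambda>k. tk' m (Suc k)) (\<eta> m)" for m using sp_valid[OF sp'] .
  have D: "(\<integral>\<^sup>+\<omega>. ennreal ((JR m \<omega> - JW m \<omega>)\<^sup>2) \<partial>M) \<le>
     2 * (\<integral>\<^sup>+\<omega>. (\<integral>\<^sup>+s\<in>{0..T}. ennreal ((simple_val (n m) (tk m) (\<xi> m) s \<omega> - b s \<omega>)\<^sup>2) \<partial>lborel) \<partial>M)
   + 2 * (\<integral>\<^sup>+\<omega>. (\<integral>\<^sup>+s\<in>{0..u}. ennreal ((simple_val (n' m) (tk' m) (\<eta> m) s \<omega> - b s \<omega>)\<^sup>2) \<partial>lborel) \<partial>M)" for m
  proof -
    note vc = valid_cat[OF valid_rest[OF v1[of m], of u] v2[of m]]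
    have "(\<integral>\<^sup>+\<omega>. ennreal ((JR m \<omega> - JW m \<omega>)\<^sup>2) \<partial>M) =
      (\<integral>\<^sup>+\<omega>. (\<integral>\<^sup>+s. ennreal ((fval (n m) (tk m) (rest u (tk m) (\<lambda>k. tk m (Suc k))) (\<xi> m) s \<omega>
          - fval (n' m) (tk' m) (\<lambda>k. tk' m (Suc k)) (\<eta> m) s \<omega>)\<^sup>2) \<partial>lborel) \<partial>M)"
      using ISO[OF vc] L2_enn[OF ISO(1)[OF vc]]
      unfolding fval_cat fint_cat JR_def JW_def by simp
    also note cmp_bound[OF u v1[of m] sp_e_le[OF sp] v2[of m] sp_e_le[OF sp']]
    finally show ?thesis unfolding sv_eq .
  qed
  have JRm: "JR m \<in> borel_measurable M" for m
    unfolding JR_def by (rule fint_M[OF valid_rest[OF v1]])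
  have JWm: "JW m \<in> borel_measurable M" for m
    unfolding JW_def by (rule fint_M[OF v2])
  define G where "G m = 2 * (\<integral>\<^sup>+\<omega>. ennreal ((I u \<omega> - JW m \<omega>)\<^sup>2) \<partial>M) + 2 * (
     2 * (\<integral>\<^sup>+\<omega>. (\<integral>\<^sup>+s\<in>{0..T}. ennreal ((simple_val (n m) (tk m) (\<xi> m) s \<omega> - b s \<omega>)\<^sup>2) \<partial>lborel) \<partial>M)
   + 2 * (\<integral>\<^sup>+\<omega>. (\<integral>\<^sup>+s\<in>{0..u}. ennreal ((simple_val (n' m) (tk' m) (\<eta> m) s \<omega> - b s \<omega>)\<^sup>2) \<partial>lborel) \<partial>M))" for m
  have bd: "(\<integral>\<^sup>+\<omega>. ennreal ((I u \<omega> - JR m \<omega>)\<^sup>2) \<partial>M) \<le> G m" for m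
  proof -
    have "(\<integral>\<^sup>+\<omega>. ennreal ((I u \<omega> - JR m \<omega>)\<^sup>2) \<partial>M) \<le>
       (\<integral>\<^sup>+\<omega>. 2 * ennreal ((I u \<omega> - JW m \<omega>)\<^sup>2) + 2 * ennreal ((JW m \<omega> - JR m \<omega>)\<^sup>2) \<partial>M)"
      by (intro nn_integral_mono enn_tri)
    also have "\<dots> = 2 * (\<integral>\<^sup>+\<omega>. ennreal ((I u \<omega> - JW m \<omega>)\<^sup>2) \<partial>M) + 2 * (\<integral>\<^sup>+\<omega>. ennreal ((JR m \<omega> - JW m \<omega>)\<^sup>2) \<partial>M)"
      by (subst nn2) (use Iu JRm JWm in \<open>auto simp: power2_commute\<close>)
    also have "\<dots> \<le> G m"
      unfolding G_def using D[of m] by (intro add_mono order_refl mult_left_mono) auto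
    finally show ?thesis .
  qed
  have lim: "G \<longlonglongrightarrow> 2 * 0 + 2 * (2 * 0 + 2 * 0)"
    using X A C unfolding G_def JW_def si_eq[symmetric]
    by (intro tendsto_add ennreal_tendsto_cmult) auto
  show ?thesis
    using le_tendsto0[OF bd] lim unfolding JR_def by simp
qed

end

context isetup
begin

definition Bb :: "real \<Rightarrow> ennreal" where
  "Bb T = (\<integral>\<^sup>+\<omega>. (\<integral>\<^sup>+s\<in>{0..T}. ennreal ((b s \<omega>)\<^sup>2) \<partial>lborel) \<partial>M)"

lemma markov2:
  assumes Y: "Y \<in> borel_measurable M" and c: "0 < c"
  shows "emeasure M {\<omega>\<in>space M. c \<le> \<bar>Y \<omega>\<bar>} \<le> ennreal (1 / c\<^sup>2) * (\<integral>\<^sup>+\<omega>. ennreal ((Y \<omega>)\<^sup>2) \<partial>M)"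
proof -
  have S: "{\<omega>\<in>space M. c \<le> \<bar>Y \<omega>\<bar>} \<in> sets M" using Y by measurable
  have "emeasure M {\<omega>\<in>space M. c \<le> \<bar>Y \<omega>\<bar>} = (\<integral>\<^sup>+\<omega>. indicator {\<omega>\<in>space M. c \<le> \<bar>Y \<omega>\<bar>} \<omega> \<partial>M)"
    using S by simp
  also have "\<dots> \<le> (\<integral>\<^sup>+\<omega>. ennreal (1 / c\<^sup>2) * ennreal ((Y \<omega>)\<^sup>2) \<partial>M)"
  proof (rule nn_integral_mono)
    fix \<omega> assume "\<omega> \<in> space M"
    show "indicator {\<omega>\<in>space M. c \<le> \<bar>Y \<omega>\<bar>} \<omega> \<le> ennreal (1 / c\<^sup>2) * ennreal ((Y \<omega>)\<^sup>2)"
    proof (cases "c \<le> \<bar>Y \<omega>\<bar>")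
      case True
      then have "c\<^sup>2 \<le> \<bar>Y \<omega>\<bar>\<^sup>2" using c by (intro power_mono) auto
      then have "1 \<le> 1 / c\<^sup>2 * (Y \<omega>)\<^sup>2" using c by (simp add: field_simps)
      then have "ennreal 1 \<le> ennreal (1 / c\<^sup>2 * (Y \<omega>)\<^sup>2)" by (rule ennreal_leI)
      also have "\<dots> = ennreal (1 / c\<^sup>2) * ennreal ((Y \<omega>)\<^sup>2)" by (rule ennreal_mult) auto
      finally show ?thesis using True \<open>\<omega> \<in> space M\<close> by simp
    qed simp
  qed
  also have "\<dots> = ennreal (1 / c\<^sup>2) * (\<integral>\<^sup>+\<omega>. ennreal ((Y \<omega>)\<^sup>2) \<partial>M)"
    using Y by (intro nn_integral_cmult) auto
  finally show ?thesis .
qed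

lemma fval_zero: "fval 0 a e z s \<omega> = 0"
  unfolding fval_def by simp

lemma valid_zero: "valid 0 a e z"
  unfolding valid_def by simp

lemma grid_bound:
  fixes u :: "nat \<Rightarrow> real"
  assumes T: "0 \<le> T" and u0: "0 \<le> u 0" and um: "mono u" and uK: "u K = T" and lv: "0 < lv"
  shows "emeasure M {\<omega>\<in>space M. \<exists>i\<le>K. lv < \<bar>I (u i) \<omega>\<bar>} \<le> ennreal (8 / lv\<^sup>2) * Bb T"
proof -
  from Iint[OF T] obtain n tk \<xi> where
    sp: "\<And>m. simple_process M F T (n m) (tk m) (\<xi> m)" and
    A: "(\<lambda>m. \<integral>\<^sup>+\<omega>. (\<integral>\<^sup>+s\<in>{0..T}. ennreal ((simple_val (n m) (tk m) (\<xi> m) s \<omega> - b s \<omega>)\<^sup>2) \<partial>lborel) \<partial>M) \<longlonglongrightarrow> 0"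
    unfolding ito_integral_at_def by blast
  have up: "0 \<le> u i" for i using u0 um[THEN monoD, of 0 i] by auto
  have uT: "i \<le> K \<Longrightarrow> u i \<le> T" for i using um[THEN monoD, of i K] uK by auto
  have v: "valid (n m) (tk m) (\<lambda>k. tk m (Suc k)) (\<xi> m)" for m using sp_valid[OF sp] .
  define J where "J m i = fint B (n m) (tk m) (rest (u i) (tk m) (\<lambda>k. tk m (Suc k))) (\<xi> m)" for m i
  define Am where "Am m = (\<integral>\<^sup>+\<omega>. (\<integral>\<^sup>+s\<in>{0..T}. ennreal ((simple_val (n m) (tk m) (\<xi> m) s \<omega> - b s \<omega>)\<^sup>2) \<partial>lborel) \<partial>M)" for m
  define D where "D m i = (\<integral>\<^sup>+\<omega>. ennreal ((I (u i) \<omega> - J m i \<omega>)\<^sup>2) \<partial>M)" for m i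
  have Im[measurable]: "I (u i) \<in> borel_measurable M" for i
    using Iint[OF up[of i]] unfolding ito_integral_at_def by blast
  have Jm[measurable]: "J m i \<in> borel_measurable M" for m i
    unfolding J_def by (rule fint_M[OF valid_rest[OF v]])
  define S where "S = {\<omega>\<in>space M. \<exists>i\<le>K. lv < \<bar>I (u i) \<omega>\<bar>}"
  define S1 where "S1 m = {\<omega>\<in>space M. \<exists>i\<le>K. lv / 2 \<le> \<bar>J m i \<omega>\<bar>}" for m
  define S2 where "S2 m i = {\<omega>\<in>space M. lv / 2 \<le> \<bar>I (u i) \<omega> - J m i \<omega>\<bar>}" for m i
  have S1s: "S1 m \<in> sets M" for m unfolding S1_def by measurable
  have S2s: "S2 m i \<in> sets M" for m i unfolding S2_def by measurable
  have bound: "emeasure M S \<le> ennreal (4 / lv\<^sup>2) * (2 * Am m + 2 * Bb T) + (\<Sum>i\<le>K. ennreal (4 / lv\<^sup>2) * D m i)" for m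
  proof -
    have sub: "S \<subseteq> S1 m \<union> (\<Union>i\<in>{..K}. S2 m i)"
    proof
      fix \<omega> assume "\<omega> \<in> S"
      then obtain i where i: "\<omega> \<in> space M" "i \<le> K" "lv < \<bar>I (u i) \<omega>\<bar>" unfolding S_def by auto
      show "\<omega> \<in> S1 m \<union> (\<Union>i\<in>{..K}. S2 m i)"
      proof (cases "lv / 2 \<le> \<bar>J m i \<omega>\<bar>")
        case True then show ?thesis using i unfolding S1_def by auto
      next
        case False
        then have "lv / 2 \<le> \<bar>I (u i) \<omega> - J m i \<omega>\<bar>" using i by linarith
        then show ?thesis using i unfolding S2_def by auto
      qed
    qed
    have "emeasure M S \<le> emeasure M (S1 m \<union> (\<Union>i\<in>{..K}. S2 m i))"
      by (rule emeasure_mono[OF sub]) (use S1s S2s in auto)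
    also have "\<dots> \<le> emeasure M (S1 m) + emeasure M (\<Union>i\<in>{..K}. S2 m i)"
      by (rule emeasure_subadditive) (use S1s S2s in auto)
    also have "\<dots> \<le> emeasure M (S1 m) + (\<Sum>i\<le>K. emeasure M (S2 m i))"
      by (intro add_mono order_refl emeasure_subadditive_finite) (use S2s in auto)
    also have "\<dots> \<le> ennreal (4 / lv\<^sup>2) * (2 * Am m + 2 * Bb T) + (\<Sum>i\<le>K. ennreal (4 / lv\<^sup>2) * D m i)"
    proof (rule add_mono)
      show "(\<Sum>i\<le>K. emeasure M (S2 m i)) \<le> (\<Sum>i\<le>K. ennreal (4 / lv\<^sup>2) * D m i)"
      proof (rule sum_mono)
        fix i
        have "emeasure M (S2 m i) \<le> ennreal (1 / (lv/2)\<^sup>2) * D m i"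
          unfolding S2_def D_def by (rule markov2) (use lv in auto)
        then show "emeasure M (S2 m i) \<le> ennreal (4 / lv\<^sup>2) * D m i"
          by (simp add: power_divide)
      qed
      have lv2: "0 < lv / 2" using lv by simp
      have d: "(lv/2)\<^sup>2 * prob (S1 m) \<le> (\<integral>\<omega>. (J m K \<omega>)\<^sup>2 \<partial>M)"
        using doob_simple[OF v u0 um lv2, of K] unfolding S1_def J_def by simp
      have "emeasure M (S1 m) = ennreal (prob (S1 m))" using S1s by (simp add: emeasure_eq_measure)
      also have "\<dots> \<le> ennreal ((\<integral>\<omega>. (J m K \<omega>)\<^sup>2 \<partial>M) / (lv/2)\<^sup>2)"
        using d lv by (intro ennreal_leI) (simp add: field_simps)
      also have "\<dots> = ennreal (4 / lv\<^sup>2) * ennreal (\<integral>\<omega>. (J m K \<omega>)\<^sup>2 \<partial>M)"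
        using lv by (simp add: ennreal_mult[symmetric] power_divide field_simps)
      also have "ennreal (\<integral>\<omega>. (J m K \<omega>)\<^sup>2 \<partial>M) =
          (\<integral>\<^sup>+\<omega>. (\<integral>\<^sup>+s. ennreal ((fval (n m) (tk m) (rest T (tk m) (\<lambda>k. tk m (Suc k))) (\<xi> m) s \<omega> - fval 0 (\<lambda>_. 0) (\<lambda>_. 0) (\<lambda>_ _. 0) s \<omega>)\<^sup>2) \<partial>lborel) \<partial>M)"
        using ISO(2)[OF valid_rest[OF v[of m]], of T] unfolding J_def uK fval_zero by simp
      also have "\<dots> \<le> 2 * Am m + 2 * Bb T"
        using cmp_bound[OF T order_refl v[of m] sp_e_le[OF sp] valid_zero, of "\<lambda>_. 0" "\<lambda>_. 0" "\<lambda>_ _. 0"]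
        unfolding Am_def Bb_def fval_zero sv_eq by simp
      finally show "emeasure M (S1 m) \<le> ennreal (4 / lv\<^sup>2) * (2 * Am m + 2 * Bb T)"
        by (simp add: mult_left_mono)
    qed
    finally show ?thesis .
  qed
  have Dlim: "(\<lambda>m. D m i) \<longlonglongrightarrow> 0" if "i \<le> K" for i
    using ident[OF up uT[OF that] sp A] unfolding D_def J_def .
  have lim: "(\<lambda>m. ennreal (4 / lv\<^sup>2) * (2 * Am m + 2 * Bb T) + (\<Sum>i\<le>K. ennreal (4 / lv\<^sup>2) * D m i))
     \<longlonglongrightarrow> ennreal (4 / lv\<^sup>2) * (2 * 0 + 2 * Bb T) + (\<Sum>i\<le>K. ennreal (4 / lv\<^sup>2) * 0)"
    using A Dlim unfolding Am_def
    by (intro tendsto_add ennreal_tendsto_cmult tendsto_sum tendsto_const) auto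
  have "emeasure M S \<le> ennreal (4 / lv\<^sup>2) * (2 * 0 + 2 * Bb T) + (\<Sum>i\<le>K. ennreal (4 / lv\<^sup>2) * 0)"
    by (rule tendsto_lowerbound[OF lim]) (use bound in auto)
  also have "\<dots> = ennreal (8 / lv\<^sup>2) * Bb T"
  proof -
    have "ennreal (4 / lv\<^sup>2) * 2 = ennreal (8 / lv\<^sup>2)"
      using ennreal_mult[of "4 / lv\<^sup>2" 2] lv by simp
    then show ?thesis by (simp add: mult.assoc[symmetric])
  qed
  finally show ?thesis unfolding S_def .
qed

end

context isetup
begin

definition Edy :: "real \<Rightarrow> real \<Rightarrow> 'a set" where
  "Edy T lv = (\<Union>N. {\<omega>\<in>space M. \<exists>i\<le>2^N. lv < \<bar>I (real i * T / 2^N) \<omega>\<bar>})"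

lemma Edy_bound:
  assumes T: "0 \<le> T" and lv: "0 < lv"
  shows "Edy T lv \<in> sets M" "emeasure M (Edy T lv) \<le> ennreal (8 / lv\<^sup>2) * Bb T"
proof -
  define A where "A N = {\<omega>\<in>space M. \<exists>i\<le>(2::nat)^N. lv < \<bar>I (real i * T / 2^N) \<omega>\<bar>}" for N
  have up: "0 \<le> real i * T / 2^N" for i N using T by simp
  have Im[measurable]: "I (real i * T / 2^N) \<in> borel_measurable M" for i N
    using Iint[OF up[of i N]] unfolding ito_integral_at_def by blast
  have As: "A N \<in> sets M" for N unfolding A_def by measurable
  have inc: "incseq A"
  proof (rule incseq_SucI)
    fix N show "A N \<subseteq> A (Suc N)"
    proof
      fix \<omega> assume "\<omega> \<in> A N"
      then obtain i where i: "\<omega> \<in> space M" "i \<le> 2^N" "lv < \<bar>I (real i * T / 2^N) \<omega>\<bar>" unfolding A_def by auto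
      have "real (2 * i) * T / 2 ^ Suc N = real i * T / 2^N" by simp
      moreover have "2 * i \<le> 2 ^ Suc N" using i by simp
      ultimately show "\<omega> \<in> A (Suc N)" using i unfolding A_def by (metis (mono_tags, lifting) mem_Collect_eq)
    qed
  qed
  have "Edy T lv = (\<Union>N. A N)" unfolding Edy_def A_def by simp
  then show "Edy T lv \<in> sets M" using As by auto
  have b: "emeasure M (A N) \<le> ennreal (8 / lv\<^sup>2) * Bb T" for N
  proof -
    have "emeasure M {\<omega>\<in>space M. \<exists>i\<le>2^N. lv < \<bar>I ((\<lambda>i. real i * T / 2^N) i) \<omega>\<bar>} \<le> ennreal (8 / lv\<^sup>2) * Bb T"
      by (rule grid_bound[OF T _ _ _ lv]) (auto simp: mono_def T divide_right_mono mult_right_mono)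
    then show ?thesis unfolding A_def by simp
  qed
  have rA: "range A \<subseteq> sets M" using As by auto
  have "emeasure M (\<Union>N. A N) = (SUP N. emeasure M (A N))"
    using SUP_emeasure_incseq[OF rA inc] by simp
  also have "\<dots> \<le> ennreal (8 / lv\<^sup>2) * Bb T" using b by (simp add: SUP_le_iff)
  finally show "emeasure M (Edy T lv) \<le> ennreal (8 / lv\<^sup>2) * Bb T" using \<open>Edy T lv = (\<Union>N. A N)\<close> by simp
qed

lemma Bb_bound:
  assumes bnd: "\<And>t. t \<ge> 0 \<Longrightarrow> (\<integral>\<^sup>+\<omega>. ennreal ((b t \<omega>)\<^sup>2) \<partial>M) \<le> ennreal (C * (1 + t powr (2 * \<beta>)))"
    and C: "0 < C" and \<beta>: "0 < \<beta>" and T: "1 \<le> T"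
  shows "Bb T \<le> ennreal (2 * C * T powr (2 * \<beta>) * T)"
proof -
  interpret pf: pair_sigma_finite M lborel
    by (intro pair_sigma_finite.intro sigma_finite_lborel) unfold_locales
  have T0: "0 \<le> T" using T by simp
  have jm: "(\<lambda>(\<omega>, s). ennreal ((bj T \<omega> s)\<^sup>2) * indicator {0..T} s) \<in> borel_measurable (M \<Otimes>\<^sub>M lborel)"
  proof -
    have [measurable]: "(\<lambda>(\<omega>, s). bj T \<omega> s) \<in> borel_measurable (M \<Otimes>\<^sub>M lborel)" using bj_meas[OF T0] .
    have "(\<lambda>p. ennreal (((\<lambda>(\<omega>, s). bj T \<omega> s) p)\<^sup>2) * indicator {0..T} (snd p)) \<in> borel_measurable (M \<Otimes>\<^sub>M lborel)"
      by measurable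
    then show ?thesis by (simp add: split_beta')
  qed
  have eq: "ennreal ((b s \<omega>)\<^sup>2) * indicator {0..T} s = ennreal ((bj T \<omega> s)\<^sup>2) * indicator {0..T} s" for s \<omega>
    by (auto simp: bj_def indicator_def)
  have "Bb T = (\<integral>\<^sup>+\<omega>. (\<integral>\<^sup>+s. ennreal ((bj T \<omega> s)\<^sup>2) * indicator {0..T} s \<partial>lborel) \<partial>M)"
    unfolding Bb_def eq ..
  also have "\<dots> = (\<integral>\<^sup>+s. (\<integral>\<^sup>+\<omega>. ennreal ((bj T \<omega> s)\<^sup>2) * indicator {0..T} s \<partial>M) \<partial>lborel)"
    using pf.Fubini'[OF jm] by simp
  also have "\<dots> \<le> (\<integral>\<^sup>+s. ennreal (2 * C * T powr (2 * \<beta>)) * indicator {0..T} s \<partial>lborel)"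
  proof (rule nn_integral_mono)
    fix s :: real
    show "(\<integral>\<^sup>+\<omega>. ennreal ((bj T \<omega> s)\<^sup>2) * indicator {0..T} s \<partial>M) \<le> ennreal (2 * C * T powr (2 * \<beta>)) * indicator {0..T} s"
    proof (cases "s \<in> {0..T}")
      case True
      then have s: "0 \<le> s" "s \<le> T" by auto
      have "(\<integral>\<^sup>+\<omega>. ennreal ((bj T \<omega> s)\<^sup>2) * indicator {0..T} s \<partial>M) = (\<integral>\<^sup>+\<omega>. ennreal ((b s \<omega>)\<^sup>2) \<partial>M)"
        using True by (simp add: bj_def)
      also have "\<dots> \<le> ennreal (C * (1 + s powr (2 * \<beta>)))" using bnd[OF s(1)] .
      also have "\<dots> \<le> ennreal (2 * C * T powr (2 * \<beta>))"
      proof (rule ennreal_leI)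
        have h1: "s powr (2 * \<beta>) \<le> T powr (2 * \<beta>)" using s \<beta> by (intro powr_mono2) auto
        have h2: "1 \<le> T powr (2 * \<beta>)" using T \<beta> by (intro ge_one_powr_ge_zero) auto
        have "C * s powr (2 * \<beta>) \<le> C * T powr (2 * \<beta>)" by (rule mult_left_mono[OF h1]) (use C in simp)
        moreover have "C * 1 \<le> C * T powr (2 * \<beta>)" by (rule mult_left_mono[OF h2]) (use C in simp)
        moreover have "C * (1 + s powr (2 * \<beta>)) = C * 1 + C * s powr (2 * \<beta>)" by (simp add: algebra_simps)
        moreover have "2 * C * T powr (2 * \<beta>) = C * T powr (2 * \<beta>) + C * T powr (2 * \<beta>)" by simp
        ultimately show "C * (1 + s powr (2 * \<beta>)) \<le> 2 * C * T powr (2 * \<beta>)" by linarith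
      qed
      finally show ?thesis using True by simp
    qed simp
  qed
  also have "\<dots> = ennreal (2 * C * T powr (2 * \<beta>)) * ennreal T"
    using T0 by (subst nn_integral_cmult_indicator) auto
  also have "\<dots> = ennreal (2 * C * T powr (2 * \<beta>) * T)"
    using C T0 by (simp add: ennreal_mult)
  finally show ?thesis .
qed

lemma bound_all:
  assumes \<omega>: "\<omega> \<in> space M" "\<omega> \<notin> Edy T lv" and T: "0 < T"
    and cont: "continuous_on {0..} (\<lambda>t. I t \<omega>)" and t: "0 \<le> t" "t \<le> T"
  shows "\<bar>I t \<omega>\<bar> \<le> lv"
proof -
  define i where "i N = nat \<lfloor>t * 2^N / T\<rfloor>" for N :: nat
  define p where "p N = real (i N) * T / 2^N" for N :: nat
  have fl: "0 \<le> t * 2^N / T" for N using t T by simp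
  have i1: "real (i N) \<le> t * 2^N / T" for N unfolding i_def using fl[of N] by linarith
  have i2: "t * 2^N / T < real (i N) + 1" for N unfolding i_def using fl[of N] by linarith
  have ile: "i N \<le> 2^N" for N
  proof -
    have "t * 2^N / T \<le> 2^N" using t T by (simp add: field_simps)
    then have "real (i N) \<le> 2^N" using i1[of N] by linarith
    then show ?thesis by (metis of_nat_le_iff of_nat_numeral of_nat_power)
  qed
  have pb: "\<bar>I (p N) \<omega>\<bar> \<le> lv" for N
    using \<omega> ile[of N] unfolding Edy_def p_def by (auto simp: not_less)
  have p1: "p N \<le> t" for N using i1[of N] T unfolding p_def by (simp add: field_simps)
  have p2: "t - T / 2^N < p N" for N
  proof -
    have "(t * 2^N / T - 1) * (T / 2^N) < real (i N) * (T / 2^N)"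
      by (rule mult_strict_right_mono) (use i2[of N] T in auto)
    moreover have "(t * 2^N / T - 1) * (T / 2^N) = t - T / 2^N" using T by (simp add: field_simps)
    ultimately show ?thesis by (simp add: p_def)
  qed
  have p0: "0 \<le> p N" for N unfolding p_def using T by simp
  have "(\<lambda>N. T / 2^N) \<longlonglongrightarrow> 0"
    by (rule LIMSEQ_divide_realpow_zero) auto
  then have "(\<lambda>N. t - T / 2^N) \<longlonglongrightarrow> t - 0" by (intro tendsto_diff tendsto_const)
  then have pl: "p \<longlonglongrightarrow> t"
    by (intro tendsto_sandwich[of "\<lambda>N. t - T / 2^N" p sequentially "\<lambda>_. t"])
       (use p1 p2 in \<open>auto intro!: always_eventually less_imp_le\<close>)
  have "(\<lambda>N. I (p N) \<omega>) \<longlonglongrightarrow> I t \<omega>"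
    by (rule continuous_on_tendsto_compose[OF cont pl]) (use t p0 in auto)
  then have "(\<lambda>N. \<bar>I (p N) \<omega>\<bar>) \<longlonglongrightarrow> \<bar>I t \<omega>\<bar>" by (rule tendsto_rabs)
  then show ?thesis by (rule tendsto_upperbound) (use pb in auto)
qed

end

lemma gk_eq:
  fixes k :: nat and \<theta> \<beta> C :: real
  shows "8 / (2 powr (\<theta> * real k))\<^sup>2 * (2 * C * (2 powr (real k + 1)) powr (2*\<beta>) * 2 powr (real k + 1))
     = 16 * C * 2 powr (2*\<beta> + 1) * (2 powr (2*\<beta> + 1 - 2*\<theta>)) ^ k"
proof -
  have e1: "(2 powr (\<theta> * real k))\<^sup>2 = 2 powr (2 * \<theta> * real k)"
    by (simp add: power2_eq_square powr_add[symmetric] algebra_simps)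
  have e2: "(2 powr (real k + 1)) powr (2*\<beta>) = 2 powr ((real k + 1) * (2*\<beta>))"
    by (simp add: powr_powr)
  have e3: "(2 powr (2*\<beta> + 1 - 2*\<theta>)) ^ k = 2 powr ((2*\<beta> + 1 - 2*\<theta>) * real k)"
    by (simp add: powr_realpow[symmetric] powr_powr)
  have e4: "2 powr ((real k + 1) * (2*\<beta>)) * 2 powr (real k + 1) = 2 powr (2 * \<theta> * real k) * (2 powr (2*\<beta> + 1) * 2 powr ((2*\<beta> + 1 - 2*\<theta>) * real k))"
    by (simp add: powr_add[symmetric] algebra_simps)
  show ?thesis unfolding e1 e2 e3 using e4 by (simp add: field_simps)
qed

context isetup
begin

lemma final:
  assumes bnd: "\<And>t. t \<ge> 0 \<Longrightarrow> (\<integral>\<^sup>+\<omega>. ennreal ((b t \<omega>)\<^sup>2) \<partial>M) \<le> ennreal (C * (1 + t powr (2 * \<beta>)))"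
    and C: "0 < C" and \<beta>: "0 < \<beta>" and \<gamma>: "\<beta> + 1 / 2 < \<gamma>"
    and cont: "AE \<omega> in M. continuous_on {0..} (\<lambda>t. I t \<omega>)"
  shows "AE \<omega> in M. ((\<lambda>t. I t \<omega> / t powr \<gamma>) \<longlongrightarrow> 0) at_top"
proof -
  define \<theta> where "\<theta> = (\<beta> + 1 / 2 + \<gamma>) / 2"
  have th1: "\<beta> + 1 / 2 < \<theta>" and th2: "\<theta> < \<gamma>" and th0: "0 < \<theta>"
    using \<gamma> \<beta> unfolding \<theta>_def by auto
  define Tk where "Tk k = 2 powr (real k + 1)" for k :: nat
  define Lk where "Lk k = 2 powr (\<theta> * real k)" for k :: nat
  define Ek where "Ek k = Edy (Tk k) (Lk k)" for k
  define r where "r = 2 powr (2*\<beta> + 1 - 2*\<theta>)"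
  have Tk1: "1 \<le> Tk k" for k unfolding Tk_def by (rule ge_one_powr_ge_zero) auto
  have Lk0: "0 < Lk k" for k unfolding Lk_def by simp
  have Es: "Ek k \<in> sets M" for k unfolding Ek_def using Edy_bound(1) Tk1[of k] Lk0[of k] by simp
  have Emeas: "measure M (Ek k) \<le> 16 * C * 2 powr (2*\<beta> + 1) * r ^ k" for k
  proof -
    have "emeasure M (Ek k) \<le> ennreal (8 / (Lk k)\<^sup>2) * Bb (Tk k)"
      unfolding Ek_def using Edy_bound(2) Tk1[of k] Lk0[of k] by simp
    also have "\<dots> \<le> ennreal (8 / (Lk k)\<^sup>2) * ennreal (2 * C * Tk k powr (2 * \<beta>) * Tk k)"
      by (intro mult_left_mono Bb_bound[OF bnd C \<beta> Tk1]) auto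
    also have "\<dots> = ennreal (8 / (Lk k)\<^sup>2 * (2 * C * Tk k powr (2 * \<beta>) * Tk k))"
      using C Tk1[of k] by (subst ennreal_mult) auto
    also have "8 / (Lk k)\<^sup>2 * (2 * C * Tk k powr (2 * \<beta>) * Tk k) = 16 * C * 2 powr (2*\<beta> + 1) * r ^ k"
      unfolding Lk_def Tk_def r_def by (rule gk_eq)
    finally have "ennreal (measure M (Ek k)) \<le> ennreal (16 * C * 2 powr (2*\<beta> + 1) * r ^ k)"
      using Es by (simp add: emeasure_eq_measure)
    then show ?thesis using C by (subst (asm) ennreal_le_iff) (auto simp: r_def)
  qed
  have r1: "r < 1" and r0: "0 \<le> r"
  proof -
    have "2 powr (2*\<beta> + 1 - 2*\<theta>) < 2 powr 0" using th1 by (intro powr_less_mono) auto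
    then show "r < 1" unfolding r_def by simp
    show "0 \<le> r" unfolding r_def by simp
  qed
  have summ: "summable (\<lambda>k. measure M (Ek k))"
  proof (rule summable_comparison_test')
    show "summable (\<lambda>k. 16 * C * 2 powr (2*\<beta> + 1) * r ^ k)"
      by (intro summable_mult summable_geometric) (use r0 r1 in auto)
    show "norm (measure M (Ek k)) \<le> 16 * C * 2 powr (2*\<beta> + 1) * r ^ k" for k
      using Emeas[of k] by simp
  qed
  have BC: "AE \<omega> in M. eventually (\<lambda>k. \<omega> \<in> space M - Ek k) sequentially"
    by (rule borel_cantelli_AE1[OF Es _ summ]) (simp add: emeasure_eq_measure)
  show ?thesis
    using cont BC AE_space
  proof eventually_elim
    case (elim \<omega>)
    then have \<omega>: "\<omega> \<in> space M" and ct: "continuous_on {0..} (\<lambda>t. I t \<omega>)" by auto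
    from elim obtain k0 where k0: "\<And>k. k \<ge> k0 \<Longrightarrow> \<omega> \<notin> Ek k"
      unfolding eventually_sequentially by auto
    define \<delta> where "\<delta> = \<gamma> - \<theta>"
    have \<delta>: "0 < \<delta>" unfolding \<delta>_def using th2 by simp
    show ?case
      unfolding tendsto_iff
    proof (intro allI impI)
      fix \<epsilon> :: real assume \<epsilon>: "0 < \<epsilon>"
      have "2 powr (- \<delta>) < 2 powr 0" by (intro powr_less_mono) (use \<delta> in auto)
      then have q: "2 powr (- \<delta>) < 1" by simp
      have "(\<lambda>k. (2 powr (- \<delta>)) ^ k) \<longlonglongrightarrow> 0"
        by (rule LIMSEQ_realpow_zero) (use q in auto)
      then have "eventually (\<lambda>k. (2 powr (- \<delta>)) ^ k < \<epsilon>) sequentially"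
        using \<epsilon> by (simp add: order_tendsto_iff)
      then obtain N where N: "\<And>k. k \<ge> N \<Longrightarrow> (2 powr (- \<delta>)) ^ k < \<epsilon>"
        unfolding eventually_sequentially by auto
      define k1 where "k1 = max k0 N"
      have pk: "(2 powr (- \<delta>)) ^ k = 2 powr (- \<delta> * real k)" for k
        by (simp add: powr_realpow[symmetric] powr_powr)
      show "eventually (\<lambda>t. dist (I t \<omega> / t powr \<gamma>) 0 < \<epsilon>) at_top"
        unfolding eventually_at_top_linorder
      proof (intro exI allI impI)
        fix t assume t: "2 powr real k1 \<le> t"
        have t0: "0 < t" using t by (smt (verit) powr_gt_zero)
        define k where "k = nat \<lfloor>log 2 t\<rfloor>"
        have lk1: "real k1 \<le> log 2 t"
        proof -
          have "log 2 (2 powr real k1) \<le> log 2 t"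
            using log_le_cancel_iff[of 2 "2 powr real k1" t] t t0 by (simp del: log_powr_cancel)
          then show ?thesis by simp
        qed
        have lk: "0 \<le> log 2 t" using lk1 by linarith
        have kk1: "k1 \<le> k" unfolding k_def using lk1 by (metis le_nat_floor of_nat_le_iff le_floor_iff floor_of_nat nat_int)
        have kl: "real k \<le> log 2 t" unfolding k_def using lk by linarith
        have ku: "log 2 t < real k + 1" unfolding k_def using lk by linarith
        have tlow: "2 powr real k \<le> t"
        proof -
          have "2 powr real k \<le> 2 powr (log 2 t)" using kl by simp
          then show ?thesis using t0 by simp
        qed
        have tup: "t \<le> Tk k"
        proof -
          have "2 powr (log 2 t) \<le> 2 powr (real k + 1)" using ku by simp
          then show ?thesis using t0 unfolding Tk_def by simp
        qed
        have nE: "\<omega> \<notin> Edy (Tk k) (Lk k)" using k0[of k] kk1 unfolding Ek_def k1_def by auto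
        have bd: "\<bar>I t \<omega>\<bar> \<le> Lk k"
          by (rule bound_all[OF \<omega> nE _ ct]) (use Tk1[of k] t0 tup in auto)
        have tg: "2 powr (\<gamma> * real k) \<le> t powr \<gamma>"
        proof -
          have "(2 powr real k) powr \<gamma> \<le> t powr \<gamma>" using tlow \<gamma> \<beta> by (intro powr_mono2) auto
          then show ?thesis by (simp add: powr_powr mult.commute)
        qed
        have "dist (I t \<omega> / t powr \<gamma>) 0 = \<bar>I t \<omega>\<bar> / t powr \<gamma>" using t0 by (simp add: abs_divide)
        also have "\<dots> \<le> Lk k / 2 powr (\<gamma> * real k)"
          by (rule frac_le) (use bd tg in auto)
        also have "\<dots> = 2 powr (- \<delta> * real k)"
          unfolding Lk_def \<delta>_def by (simp add: powr_diff[symmetric] algebra_simps)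
        also have "\<dots> = (2 powr (- \<delta>)) ^ k" using pk by simp
        also have "\<dots> < \<epsilon>" using N kk1 unfolding k1_def by auto
        finally show "dist (I t \<omega> / t powr \<gamma>) 0 < \<epsilon>" .
      qed
    qed
  qed
qed

end

theorem mainTheorem1:
  fixes M :: "'a measure" and F :: "real \<Rightarrow> 'a measure"
    and B b I :: "real \<Rightarrow> 'a \<Rightarrow> real" and C \<beta> \<gamma> :: real
  assumes "filtered_prob_space M F"
    and "wiener_process M F B"
    and "progressive F b"
    and "C > 0" and "\<beta> > 0"
    and "\<And>t. t \<ge> 0 \<Longrightarrow> (\<integral>\<^sup>+\<omega>. ennreal ((b t \<omega>)\<^sup>2) \<partial>M) \<le> ennreal (C * (1 + t powr (2 * \<beta>)))"
    and "ito_integral_process M F B b I"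
    and "\<gamma> > \<beta> + 1 / 2"
  shows "AE \<omega> in M. ((\<lambda>t. I t \<omega> / t powr \<gamma>) \<longlongrightarrow> 0) at_top"
proof -
  have ps: "prob_space M" and fl: "filtration (space M) F" and sb: "\<And>t. sets (F t) \<subseteq> sets M"
    using assms(1) unfolding filtered_prob_space_def by auto
  have Bad: "\<And>t. t \<ge> 0 \<Longrightarrow> B t \<in> borel_measurable (F t)"
    and Bind: "\<And>s t A U. 0 \<le> s \<Longrightarrow> s < t \<Longrightarrow> A \<in> sets (F s) \<Longrightarrow> U \<in> sets borel \<Longrightarrow>
        measure M (A \<inter> {\<omega>\<in>space M. B t \<omega> - B s \<omega> \<in> U}) =
        measure M A * measure (density lborel (normal_density 0 (sqrt (t - s)))) U"
    using assms(2) unfolding wiener_process_def by auto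
  have Iint: "\<And>T. 0 \<le> T \<Longrightarrow> ito_integral_at M F B b T (I T)"
    and cont: "AE \<omega> in M. continuous_on {0..} (\<lambda>t. I t \<omega>)"
    using assms(7) unfolding ito_integral_process_def by auto
  interpret isetup M F B b I
    by (rule isetup.intro[OF wsetup.intro[OF ps wsetup_axioms.intro] isetup_axioms.intro])
       (use fl sb Bad Bind assms(3) Iint in auto)
  show ?thesis
    by (rule final[OF assms(6) assms(4) assms(5) assms(8) cont])
qed

end
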